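(* Let $I\ge 2$, $M\ge 1$ be integers and let $N\ge 2$ be an even integer. Fix constants $\lambda>0$, $c>0$, $\Delta f>0$, $\sigma>0$; antenna positions $\mathbf{q}_1,\dots,\mathbf{q}_M\in\mathbb{R}^3$; rotation matrices $\boldsymbol{\Omega}_1,\dots,\boldsymbol{\Omega}_I\in\mathbb{R}^{3\times 3}$ (with $\boldsymbol{\Omega}_i^{\mathrm T}\boldsymbol{\Omega}_i=\mathbf{I}_3$, $\det\boldsymbol{\Omega}_i=1$); displacements $\boldsymbol{\delta}_1,\dots,\boldsymbol{\delta}_I\in\mathbb{R}^3$; and subcarrier frequencies $(f_1,\dots,f_N)=\Delta f\cdot(-N/2,\dots,-1,1,\dots,N/2)$. Let $\mathbf{p}\in\mathbb{R}^3$ with $\mathbf{p}\neq\boldsymbol{\delta}_i$ for all $i$, write $\tilde{\mathbf{p}}_i=\mathbf{p}-\boldsymbol{\delta}_i$, and let $\gamma_1,\dots,\gamma_I>0$, $\beta_1,\dots,\beta_I\in\mathbb{R}$. For real numbers $t_1,\dots,t_I$ define, for $i=1,\dots,I$, $m=1,\dots,M$, $n=1,\dots,N$, $$\mu_{i,m,n}(\mathbf{p},t_i,\gamma_i,\beta_i)=\gamma_i e^{\mathrm{j}\beta_i}\exp\!\Big(\mathrm{j}\tfrac{2\pi}{\lambda}\tfrac{(\mathbf{p}-\boldsymbol{\delta}_i)^{\mathrm T}}{\|\mathbf{p}-\boldsymbol{\delta}_i\|}\boldsymbol{\Omega}_i\mathbf{q}_m\Big)\exp\!\Big(-\mathrm{j}2\pi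 f_n\big(\tfrac{\|\mathbf{p}-\boldsymbol{\delta}_i\|}{c}-t_i\big)\Big).$$ Consider observations $[\mathbf{H}_i]_{m,n}=\mu_{i,m,n}+w_{i,m,n}$ with $w_{i,m,n}$ i.i.d. circularly symmetric complex Gaussian of variance $\sigma^2$. (VLA) The parameter vector is $\boldsymbol{\varepsilon}=[\mathbf{p}^{\mathrm T},\tau_1,\dots,\tau_I,\gamma_1,\beta_1,\dots,\gamma_I,\beta_I]^{\mathrm T}\in\mathbb{R}^{3+3I}$, with $t_i=\tau_i$ in the $i$-th mean. (RLA) The parameter vector is $\bar{\boldsymbol{\varepsilon}}=[\mathbf{p}^{\mathrm T},\tau,\gamma_1,\beta_1,\dots,\gamma_I,\beta_I]^{\mathrm T}\in\mathbb{R}^{4+2I}$, with $t_i=\tau$ for all $i$. In each case the Fisher information matrix has entries $$[\mathbf{J}]_{s,s'}=\frac{2}{\sigma^2}\,\Re\Big\{\sum_{i=1}^{I}\sum_{n=1}^{N}\sum_{m=1}^{M}\frac{\partial \mu_{i,m,n}^{*}}{\partial[\boldsymbol{\varepsilon}]_s}\frac{\partial \mu_{i,m,n}}{\partial[\boldsymbol{\varepsilon}]_{s'}}\Big\},$$ and the equivalent Fisher information matrix for $\mathbf{p}$ is the Schur complement $\mathbf{J}_{\mathbf{p}\mathbf{p}}-\mathbf{J}_{\mathbf{p}\boldsymbol{\eta}}\mathbf{J}_{\boldsymbol{\eta}\boldsymbol{\eta}}^{-1}\mathbf{J}_{\boldsymbol{\eta}\mathbf{p}}$, where $\boldsymbol{\eta}$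 denotes all parameters other than $\mathbf{p}$. Let $\mathbf{V}^{\mathbf{p},\mathbf{p}}$ be this $3\times3$ matrix for the VLA model and $\mathbf{R}^{\mathbf{p},\mathbf{p}}$ for the RLA model. Then $$\mathbf{R}^{\mathbf{p},\mathbf{p}}-\mathbf{V}^{\mathbf{p},\mathbf{p}}=\sum_{i=1}^{I-1}\sum_{j=i+1}^{I}\zeta_{i,j}\Big(\frac{\tilde{\mathbf{p}}_i}{\|\tilde{\mathbf{p}}_i\|}-\frac{\tilde{\mathbf{p}}_j}{\|\tilde{\mathbf{p}}_j\|}\Big)\Big(\frac{\tilde{\mathbf{p}}_i}{\|\tilde{\mathbf{p}}_i\|}-\frac{\tilde{\mathbf{p}}_j}{\|\tilde{\mathbf{p}}_j\|}\Big)^{\mathrm T},\qquad \zeta_{i,j}=\frac{2\pi^2\Delta f^2MN(N+1)(N+2)}{3\sigma^2c^2}\cdot\frac{\gamma_i^2\gamma_j^2}{\sum_{k=1}^{I}\gamma_k^2},$$ and $$\operatorname{tr}\big(\mathbf{R}^{\mathbf{p},\mathbf{p}}-\mathbf{V}^{\mathbf{p},\mathbf{p}}\big)=\sum_{i=1}^{I-1}\sum_{j=i+1}^{I}2\zeta_{i,j}(1-\cos\rho_{i,j}),\qquad \rho_{i,j}=\arccos\!\Big(\frac{\tilde{\mathbf{p}}_i^{\mathrm T}\tilde{\mathbf{p}}_j}{\|\tilde{\mathbf{p}}_i\|\|\tilde{\mathbf{p}}_j\|}\Big).$$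
   Context: Setting: a single-antenna source at unknown position $\mathbf{p}$ is observed over $N$ OFDM subcarriers by an $M$-antenna array at $I$ poses (displacement $\boldsymbol{\delta}_i$, rotation $\boldsymbol{\Omega}_i$); $\gamma_i=|\alpha_i|$ and $\beta_i=\angle\alpha_i$ are the magnitude and phase of the complex channel gain at pose $i$. In the "virtual large array" (VLA) each pose has its own unknown time offset $\tau_i$; in the "real large array" (RLA) all poses share a single unknown time offset $\tau$. $\mathrm{j}$ is the imaginary unit, $^{*}$ complex conjugation, $\Re$ the real part, $\operatorname{tr}$ the trace. *)

theory Defs
  imports Complex_Main "Jordan_Normal_Form.Gauss_Jordan_Elimination" "Jordan_Normal_Form.Determinant"
begin

definition mtrace :: "real mat \<Rightarrow> real" where
  "mtrace A = (\<Sum>k<dim_row A. A $$ (k, k))"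

definition vnorm :: "real Matrix.vec \<Rightarrow> real" where
  "vnorm v = sqrt (v \<bullet> v)"

definition partial_deriv :: "((nat \<Rightarrow> real) \<Rightarrow> complex) \<Rightarrow> (nat \<Rightarrow> real) \<Rightarrow> nat \<Rightarrow> complex" where
  "partial_deriv f e s = (SOME D. ((\<lambda>x. f (e(s := x))) has_vector_derivative D) (at (e s)))"

(* subcarrier frequencies f_1..f_N = df * (-N/2, ..., -1, 1, ..., N/2) *)
definition freq :: "real \<Rightarrow> nat \<Rightarrow> nat \<Rightarrow> real" where
  "freq df N n = (if n \<le> N div 2 then df * (real n - real (N div 2) - 1)
                  else df * (real n - real (N div 2)))"

definition mu :: "real \<Rightarrow> real \<Rightarrow> real \<Rightarrow> nat \<Rightarrow> (nat \<Rightarrow> real Matrix.vec) \<Rightarrow>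
    (nat \<Rightarrow> real mat) \<Rightarrow> (nat \<Rightarrow> real Matrix.vec) \<Rightarrow>
    real Matrix.vec \<Rightarrow> real \<Rightarrow> real \<Rightarrow> real \<Rightarrow> nat \<Rightarrow> nat \<Rightarrow> nat \<Rightarrow> complex" where
  "mu lam c df N q Om del p t g b i m n =
     complex_of_real g * exp (\<i> * complex_of_real b)
     * exp (\<i> * complex_of_real (2 * pi / lam *
              (((p - del i) \<bullet> (Om i *\<^sub>v q m)) / vnorm (p - del i))))
     * exp (- \<i> * complex_of_real (2 * pi * freq df N n * (vnorm (p - del i) / c - t)))"

definition pos_of :: "(nat \<Rightarrow> real) \<Rightarrow> real Matrix.vec" where
  "pos_of e = vec 3 e"

(* VLA parameter layout (poses i = 1..I):
   e 0,e 1,e 2 = p; e (2+i) = tau_i; e (1+I+2i) = gamma_i; e (2+I+2i) = beta_i; length 3+3I *)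
definition mu_VLA where
  "mu_VLA lam c df N q Om del I e i m n =
     mu lam c df N q Om del (pos_of e) (e (2+i)) (e (1+I+2*i)) (e (2+I+2*i)) i m n"

(* RLA parameter layout:
   e 0,e 1,e 2 = p; e 3 = tau; e (2+2i) = gamma_i; e (3+2i) = beta_i; length 4+2I *)
definition mu_RLA where
  "mu_RLA lam c df N q Om del I e i m n =
     mu lam c df N q Om del (pos_of e) (e 3) (e (2+2*i)) (e (3+2*i)) i m n"

definition FIM :: "real \<Rightarrow> nat \<Rightarrow> nat \<Rightarrow> nat \<Rightarrow> nat \<Rightarrow>
    ((nat \<Rightarrow> real) \<Rightarrow> nat \<Rightarrow> nat \<Rightarrow> nat \<Rightarrow> complex) \<Rightarrow> (nat \<Rightarrow> real) \<Rightarrow> real mat" where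
  "FIM sigma I M N d muf e0 = mat d d (\<lambda>(s, s').
     2 / sigma\<^sup>2 * Re (\<Sum>i\<in>{1..I}. \<Sum>n\<in>{1..N}. \<Sum>m\<in>{1..M}.
        cnj (partial_deriv (\<lambda>e. muf e i m n) e0 s) * partial_deriv (\<lambda>e. muf e i m n) e0 s'))"

definition EFIM3 :: "real mat \<Rightarrow> real mat" where
  "EFIM3 J = (case split_block J 3 3 of (Jpp, Jpe, Jep, Jee) \<Rightarrow>
      Jpp - Jpe * the (mat_inverse Jee) * Jep)"

definition VLA_param :: "nat \<Rightarrow> real Matrix.vec \<Rightarrow> (nat \<Rightarrow> real) \<Rightarrow> (nat \<Rightarrow> real) \<Rightarrow> (nat \<Rightarrow> real) \<Rightarrow> nat \<Rightarrow> real" where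
  "VLA_param I p tau g b k =
     (if k < 3 then p $ k
      else if k < 3 + I then tau (k - 2)
      else if even (k - (3 + I)) then g ((k - (3 + I)) div 2 + 1)
      else b ((k - (3 + I)) div 2 + 1))"

definition RLA_param :: "nat \<Rightarrow> real Matrix.vec \<Rightarrow> real \<Rightarrow> (nat \<Rightarrow> real) \<Rightarrow> (nat \<Rightarrow> real) \<Rightarrow> nat \<Rightarrow> real" where
  "RLA_param I p tau g b k =
     (if k < 3 then p $ k
      else if k = 3 then tau
      else if even (k - 4) then g ((k - 4) div 2 + 1)
      else b ((k - 4) div 2 + 1))"

end

theory Submission
  imports Defs
begin

lemma vd_unique:
  fixes f :: "real \<Rightarrow> complex"
  assumes "(f has_vector_derivative D) (at x)" "(f has_vector_derivative D') (at x)"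
  shows "D' = D"
proof -
  from assms have "Re D' = Re D" "Im D' = Im D"
    unfolding has_vector_derivative_complex_iff using DERIV_unique by blast+
  then show ?thesis by (simp add: complex_eqI)
qed

lemma pd_eq:
  assumes "((\<lambda>x. f (e(s := x))) has_vector_derivative D) (at (e s))"
  shows "partial_deriv f e s = D"
  unfolding partial_deriv_def
  by (rule vd_unique[OF assms someI[of "\<lambda>D. ((\<lambda>x. f (e(s := x))) has_vector_derivative D) (at (e s))", OF assms]])

lemma exp_form_deriv:
  fixes G T :: "real \<Rightarrow> real"
  assumes "(G has_real_derivative G') (at x)" "(T has_real_derivative T') (at x)"
  shows "((\<lambda>x. complex_of_real (G x) * exp (\<i> * complex_of_real (T x))) has_vector_derivative
     ((complex_of_real G' + \<i> * complex_of_real (G x * T')) * exp (\<i> * complex_of_real (T x)))) (at x)"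
proof -
  have e: "\<And>y. exp (\<i> * complex_of_real y) = Complex (cos y) (sin y)"
    by (simp add: exp_eq_polar cis.code)
  show ?thesis
    unfolding has_vector_derivative_complex_iff e
    using assms
    by (auto intro!: derivative_eq_intros simp: algebra_simps)
qed


lemma vec3_neq: "p \<in> carrier_vec 3 \<Longrightarrow> d \<in> carrier_vec 3 \<Longrightarrow> p \<noteq> d \<Longrightarrow> (p - d) \<bullet> (p - d) > (0::real)"
proof -
  assume p: "p \<in> carrier_vec 3" and d: "d \<in> carrier_vec 3" and ne: "p \<noteq> d"
  have "\<exists>k<3. p $ k \<noteq> d $ k" using p d ne by (metis carrier_vecD eq_vecI)
  then obtain k where k: "k < 3" "p $ k - d $ k \<noteq> 0" by auto
  have e: "(p - d) \<bullet> (p - d) = (\<Sum>j<3. (p $ j - d $ j)^2)"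
    unfolding scalar_prod_def using d by (auto simp: power2_eq_square intro!: sum.cong)
  have "(\<Sum>j<3. (p $ j - d $ j)^2) \<ge> (p $ k - d $ k)^2"
    by (rule member_le_sum[of k "{..<3}" "\<lambda>j. (p $ j - d $ j)^2"]) (use k in auto)
  moreover have "(p $ k - d $ k)^2 > 0" using k by auto
  ultimately show ?thesis using e by linarith
qed

lemma pos_deriv:
  fixes p d w :: "real Matrix.vec"
  assumes p: "p \<in> carrier_vec 3" and d: "d \<in> carrier_vec 3" and w: "dim_vec w = 3"
    and ne: "p \<noteq> d" and s: "s < 3"
  defines "P \<equiv> \<lambda>x. vec 3 ((\<lambda>k. p $ k)(s := x))"
  shows "((\<lambda>x. vnorm (P x - d)) has_real_derivative ((p - d) $ s / vnorm (p - d))) (at (p $ s))"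
    and "(\<lambda>x. ((P x - d) \<bullet> w) / vnorm (P x - d)) differentiable (at (p $ s))"
proof -
  define h where "h = (\<lambda>x k. (if k = s then x else p $ k) - d $ k)"
  have Q: "\<And>x. (P x - d) \<bullet> (P x - d) = (\<Sum>k<3. (h x k)^2)"
    unfolding scalar_prod_def P_def h_def using d by (auto simp: power2_eq_square intro!: sum.cong)
  have L: "\<And>x. (P x - d) \<bullet> w = (\<Sum>k<3. h x k * w $ k)"
    unfolding scalar_prod_def P_def h_def using d w by (auto intro!: sum.cong)
  have Pp: "P (p $ s) = p" unfolding P_def using p by (auto intro!: eq_vecI)
  have pos: "(\<Sum>k<3. (h (p $ s) k)^2) > 0" using vec3_neq[OF p d ne] Q[of "p $ s"] Pp by simp
  have hd: "\<And>k. ((\<lambda>x. h x k) has_real_derivative (if k = s then 1 else 0)) (at x)" for x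
    unfolding h_def by (auto intro!: derivative_eq_intros)
  have Qd: "((\<lambda>x. \<Sum>k<3. (h x k)^2) has_real_derivative (\<Sum>k<3. 2 * h (p $ s) k * (if k = s then 1 else 0))) (at (p $ s))"
    by (auto intro!: derivative_eq_intros hd sum.cong)
  have Qd': "(\<Sum>k<3::nat. 2 * h (p $ s) k * (if k = s then 1 else 0)) = 2 * (p - d) $ s"
    using s d by (simp add: h_def if_distrib[of "\<lambda>x. _ * x"] sum.If_cases)
  have Ld: "((\<lambda>x. \<Sum>k<3. h x k * w $ k) has_real_derivative (\<Sum>k<3. (if k = s then 1 else 0) * w $ k)) (at (p $ s))"
    by (auto intro!: derivative_eq_intros hd sum.cong)
  have vn: "\<And>x. vnorm (P x - d) = sqrt (\<Sum>k<3. (h x k)^2)" unfolding vnorm_def Q by simp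
  have rd: "((\<lambda>x. sqrt (\<Sum>k<3. (h x k)^2)) has_real_derivative ((p - d) $ s / vnorm (p - d))) (at (p $ s))"
    using Qd pos unfolding Qd'
  proof -
    have "((\<lambda>x. sqrt (\<Sum>k<3. (h x k)^2)) has_real_derivative
        (inverse (sqrt (\<Sum>k<3. (h (p $ s) k)^2)) / 2 * (2 * (p - d) $ s))) (at (p $ s))"
      using Qd pos by (intro DERIV_chain2[OF DERIV_real_sqrt]) (auto simp: Qd')
    moreover have "sqrt (\<Sum>k<3. (h (p $ s) k)^2) = vnorm (p - d)"
      using vn[of "p $ s"] Pp by simp
    ultimately show ?thesis by (simp add: field_simps)
  qed
  show "((\<lambda>x. vnorm (P x - d)) has_real_derivative ((p - d) $ s / vnorm (p - d))) (at (p $ s))"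
    unfolding vn by (rule rd)
  show "(\<lambda>x. ((P x - d) \<bullet> w) / vnorm (P x - d)) differentiable (at (p $ s))"
    unfolding vn L real_differentiable_def
    using DERIV_divide[OF Ld rd] pos by auto
qed


lemma upd_deriv: "((\<lambda>x. (e(s := x)) k) has_real_derivative (of_bool (s = k))) (at y)"
  by (cases "s = k") auto



lemma sum_id_real: "(\<Sum>n\<in>{1..K}. real n) = real K * (real K + 1) / 2"
  by (induction K) (auto simp: field_simps)
lemma sum_sq_real: "(\<Sum>n\<in>{1..K}. (real n)^2) = real K * (real K + 1) * (2 * real K + 1) / 6"
  by (induction K) (auto simp: field_simps power2_eq_square)

lemma freq_sums:
  assumes "even N"
  shows "(\<Sum>n\<in>{1..N}. freq df N n) = 0"
    and "(\<Sum>n\<in>{1..N}. (freq df N n)^2) = df^2 * real N * (real N + 1) * (real N + 2) / 12"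
proof -
  obtain K where K: "N = 2 * K" using assms by blast
  have NK: "N div 2 = K" using K by simp
  have split: "{1..N} = {1..K} \<union> {K+1..K+K}" using K by auto
  have disj: "{1..K} \<inter> {K+1..K+K} = {}" by auto
  have lo: "\<And>n. n \<in> {1..K} \<Longrightarrow> freq df N n = df * (real n - real K - 1)"
    unfolding freq_def NK by auto
  have hi: "\<And>n. n \<in> {K+1..K+K} \<Longrightarrow> freq df N n = df * (real n - real K)"
    unfolding freq_def NK by auto
  have sh: "(\<Sum>n\<in>{K+1..K+K}. f n) = (\<Sum>n\<in>{1..K}. f (n + K))" for f :: "nat \<Rightarrow> real"
    using sum.shift_bounds_cl_nat_ivl[of f 1 K K] by (simp add: add.commute)
  have "(\<Sum>n\<in>{1..N}. freq df N n) = (\<Sum>n\<in>{1..K}. df * (real n - real K - 1)) + (\<Sum>n\<in>{K+1..K+K}. df * (real n - real K))"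
    unfolding split using disj lo hi by (simp add: sum.union_disjoint)
  also have "\<dots> = df * ((\<Sum>n\<in>{1..K}. real n) - real K * real K - real K) + df * (\<Sum>n\<in>{1..K}. real n)"
    unfolding sh by (simp add: sum_subtractf sum_distrib_left[symmetric] algebra_simps sum.distrib)
  also have "\<dots> = 0" unfolding sum_id_real by (simp add: field_simps)
  finally show "(\<Sum>n\<in>{1..N}. freq df N n) = 0" .
  have "(\<Sum>n\<in>{1..N}. (freq df N n)^2) = (\<Sum>n\<in>{1..K}. (df * (real n - real K - 1))^2) + (\<Sum>n\<in>{K+1..K+K}. (df * (real n - real K))^2)"
    unfolding split using disj lo hi by (simp add: sum.union_disjoint)
  also have "\<dots> = df^2 * ((\<Sum>n\<in>{1..K}. (real n)^2) - 2 * (real K + 1) * (\<Sum>n\<in>{1..K}. real n) + real K * (real K + 1)^2)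
       + df^2 * (\<Sum>n\<in>{1..K}. (real n)^2)"
    unfolding sh apply (simp add: power2_eq_square sum_subtractf sum_distrib_left[symmetric] algebra_simps sum.distrib)
    by (simp add: sum_distrib_left sum_distrib_right mult_ac)
  also have "\<dots> = df^2 * real N * (real N + 1) * (real N + 2) / 12"
    unfolding sum_id_real sum_sq_real K by (simp add: field_simps power2_eq_square)
  finally show "(\<Sum>n\<in>{1..N}. (freq df N n)^2) = df^2 * real N * (real N + 1) * (real N + 2) / 12" .
qed

lemma gsum:
  fixes X :: "nat \<Rightarrow> real"
  assumes "finite A" "finite B" "sum f A = 0"
  shows "(\<Sum>n\<in>A. \<Sum>m\<in>B. (X m - f n * Y) * (Z + f n * W))
     = real (card A) * Z * sum X B - real (card B) * Y * W * (\<Sum>n\<in>A. (f n)^2)"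
proof -
  have "(\<Sum>m\<in>B. (X m - f n * Y) * (Z + f n * W)) = Z * sum X B + f n * (W * sum X B - real (card B) * Y * Z)
      - (f n)^2 * (real (card B) * Y * W)" for n
    by (simp add: algebra_simps sum.distrib sum_subtractf sum_distrib_left[symmetric] sum_distrib_right[symmetric] power2_eq_square)
  then have "(\<Sum>n\<in>A. \<Sum>m\<in>B. (X m - f n * Y) * (Z + f n * W)) =
     (\<Sum>n\<in>A. Z * sum X B + f n * (W * sum X B - real (card B) * Y * Z) - (f n)^2 * (real (card B) * Y * W))" by simp
  also have "\<dots> = real (card A) * Z * sum X B + sum f A * (W * sum X B - real (card B) * Y * Z) - (\<Sum>n\<in>A. (f n)^2) * (real (card B) * Y * W)"
    by (simp add: sum.distrib sum_subtractf sum_distrib_right[symmetric])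
  finally show ?thesis using assms(3) by simp
qed

lemma gsum2:
  fixes A0 :: real
  assumes "finite A" "sum f A = 0"
  shows "(\<Sum>n\<in>A. \<Sum>m\<in>B. (A0 + f n * B0) * (C0 + f n * D0))
     = real (card B) * (real (card A) * A0 * C0 + B0 * D0 * (\<Sum>n\<in>A. (f n)^2))"
proof -
  have "(\<Sum>n\<in>A. \<Sum>m\<in>B. (A0 + f n * B0) * (C0 + f n * D0)) =
     real (card B) * (\<Sum>n\<in>A. A0 * C0 + f n * (A0 * D0 + B0 * C0) + (f n)^2 * (B0 * D0))"
    by (simp add: sum_distrib_left algebra_simps power2_eq_square)
  also have "\<dots> = real (card B) * (real (card A) * A0 * C0 + sum f A * (A0 * D0 + B0 * C0) + (\<Sum>n\<in>A. (f n)^2) * (B0 * D0))"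
    by (simp add: sum.distrib sum_distrib_right[symmetric])
  finally show ?thesis using assms by (simp add: algebra_simps)
qed

lemma cnj_re:
  fixes a a' gg t t' th :: real
  shows "Re (cnj ((complex_of_real a + \<i> * complex_of_real (gg * t)) * exp (\<i> * complex_of_real th))
      * ((complex_of_real a' + \<i> * complex_of_real (gg * t')) * exp (\<i> * complex_of_real th)))
     = a * a' + gg^2 * t * t'"
proof -
  have e: "exp (\<i> * complex_of_real th) = Complex (cos th) (sin th)"
    by (simp add: exp_eq_polar cis.code)
  have "a * a' * (cos th)^2 + a * a' * (sin th)^2 = a * a'" "gg*gg*t*t' * (cos th)^2 + gg*gg*t*t' * (sin th)^2 = gg*gg*t*t'"
    by (simp_all add: distrib_left[symmetric])
  then show ?thesis unfolding e by (simp add: algebra_simps power2_eq_square)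
qed



lemma inv_unique:
  fixes A B :: "real mat"
  assumes A: "A \<in> carrier_mat n n" and B: "B \<in> carrier_mat n n"
    and AB: "A * B = 1\<^sub>m n" and BA: "B * A = 1\<^sub>m n"
  shows "mat_inverse A = Some B"
proof (cases "mat_inverse A")
  case None
  from mat_inverse(1)[OF A None, of "()"] have "A \<notin> Units (ring_mat TYPE(real) n ())" .
  moreover have "A \<in> Units (ring_mat TYPE(real) n ())"
    unfolding Units_def ring_mat_def using A B AB BA by auto
  ultimately show ?thesis by blast
next
  case (Some B')
  from mat_inverse(2)[OF A Some] have h: "A * B' = 1\<^sub>m n" "B' * A = 1\<^sub>m n" "B' \<in> carrier_mat n n" by auto
  have "B' = B' * (A * B)" using h(3) AB by simp
  also have "\<dots> = (B' * A) * B" using h(3) A B by (simp add: assoc_mult_mat)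
  also have "\<dots> = B" using h(2) B by simp
  finally show ?thesis using Some by simp
qed

lemma schur_diag:
  fixes J :: "real mat"
  assumes J: "J \<in> carrier_mat d d" and d3: "d \<ge> 3"
    and off: "\<And>s s'. 3 \<le> s \<Longrightarrow> s < d \<Longrightarrow> 3 \<le> s' \<Longrightarrow> s' < d \<Longrightarrow> s \<noteq> s' \<Longrightarrow> J $$ (s, s') = 0"
    and diag: "\<And>s. 3 \<le> s \<Longrightarrow> s < d \<Longrightarrow> J $$ (s, s) \<noteq> 0"
  shows "EFIM3 J \<in> carrier_mat 3 3"
    and "\<And>a a'. a < 3 \<Longrightarrow> a' < 3 \<Longrightarrow> EFIM3 J $$ (a, a') =
       J $$ (a, a') - (\<Sum>s\<in>{3..<d}. J $$ (a, s) * J $$ (s, a') / J $$ (s, s))"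
proof -
  define n where "n = d - 3"
  define Jee where "Jee = mat n n (\<lambda>(i, j). J $$ (i + 3, j + 3))"
  define Jpe where "Jpe = mat 3 n (\<lambda>(i, j). J $$ (i, j + 3))"
  define Jep where "Jep = mat n 3 (\<lambda>(i, j). J $$ (i + 3, j))"
  define Jpp where "Jpp = mat 3 3 (\<lambda>ij. J $$ ij)"
  define Di where "Di = mat n n (\<lambda>(k, l). if k = l then 1 / J $$ (k + 3, k + 3) else 0)"
  have sb: "split_block J 3 3 = (Jpp, Jpe, Jep, Jee)"
    unfolding split_block_def Let_def Jee_def Jpe_def Jep_def Jpp_def n_def using J by auto
  have dg: "k < n \<Longrightarrow> J $$ (k + 3, k + 3) \<noteq> 0" for k using diag unfolding n_def by auto
  have of: "k < n \<Longrightarrow> l < n \<Longrightarrow> k \<noteq> l \<Longrightarrow> J $$ (k + 3, l + 3) = 0" for k l using off unfolding n_def by auto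
  have "Jee * Di = 1\<^sub>m n"
  proof (rule eq_matI)
    fix k l assume kl: "k < dim_row (1\<^sub>m n)" "l < dim_col (1\<^sub>m n)"
    have "(Jee * Di) $$ (k, l) = (\<Sum>j\<in>{0..<n}. J $$ (k + 3, j + 3) * (if j = l then 1 / J $$ (l + 3, l + 3) else 0))"
      using kl unfolding Jee_def Di_def by (auto simp: scalar_prod_def intro!: sum.cong)
    also have "\<dots> = J $$ (k + 3, l + 3) / J $$ (l + 3, l + 3)"
      using kl by (simp add: if_distrib[of "\<lambda>x. _ * x"] sum.delta cong: if_cong)
    also have "\<dots> = 1\<^sub>m n $$ (k, l)" using kl dg of by auto
    finally show "(Jee * Di) $$ (k, l) = 1\<^sub>m n $$ (k, l)" .
  qed (auto simp: Jee_def Di_def)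
  moreover have "Di * Jee = 1\<^sub>m n"
  proof (rule eq_matI)
    fix k l assume kl: "k < dim_row (1\<^sub>m n)" "l < dim_col (1\<^sub>m n)"
    have "(Di * Jee) $$ (k, l) = (\<Sum>j\<in>{0..<n}. (if k = j then 1 / J $$ (k + 3, k + 3) else 0) * J $$ (j + 3, l + 3))"
      using kl unfolding Jee_def Di_def by (auto simp: scalar_prod_def intro!: sum.cong)
    also have "\<dots> = J $$ (k + 3, l + 3) / J $$ (k + 3, k + 3)"
      using kl by (simp add: if_distrib[of "\<lambda>x. x * _"] sum.delta cong: if_cong)
    also have "\<dots> = 1\<^sub>m n $$ (k, l)" using kl dg of by auto
    finally show "(Di * Jee) $$ (k, l) = 1\<^sub>m n $$ (k, l)" .
  qed (auto simp: Jee_def Di_def)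
  ultimately have inv: "mat_inverse Jee = Some Di"
    by (intro inv_unique) (auto simp: Jee_def Di_def)
  have E: "EFIM3 J = Jpp - Jpe * Di * Jep" unfolding EFIM3_def sb using inv by simp
  show "EFIM3 J \<in> carrier_mat 3 3" unfolding E Jpp_def Jpe_def Di_def Jep_def by auto
  fix a a' :: nat assume a: "a < 3" "a' < 3"
  have "(Jpe * Di * Jep) $$ (a, a') = (\<Sum>k\<in>{0..<n}. (Jpe * Di) $$ (a, k) * J $$ (k + 3, a'))"
    using a unfolding Jep_def by (auto simp: scalar_prod_def Jpe_def Di_def intro!: sum.cong)
  also have "\<dots> = (\<Sum>k\<in>{0..<n}. J $$ (a, k + 3) * J $$ (k + 3, a') / J $$ (k + 3, k + 3))"
  proof (rule sum.cong)
    fix k assume k: "k \<in> {0..<n}"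
    have "(Jpe * Di) $$ (a, k) = (\<Sum>j\<in>{0..<n}. J $$ (a, j + 3) * (if j = k then 1 / J $$ (k + 3, k + 3) else 0))"
      using a k unfolding Jpe_def Di_def by (auto simp: scalar_prod_def intro!: sum.cong)
    also have "\<dots> = J $$ (a, k + 3) / J $$ (k + 3, k + 3)"
      using k by (simp add: if_distrib[of "\<lambda>x. _ * x"] sum.delta cong: if_cong)
    finally show "(Jpe * Di) $$ (a, k) * J $$ (k + 3, a') = J $$ (a, k + 3) * J $$ (k + 3, a') / J $$ (k + 3, k + 3)" by simp
  qed simp
  also have "\<dots> = (\<Sum>s\<in>{3..<d}. J $$ (a, s) * J $$ (s, a') / J $$ (s, s))"
    using sum.shift_bounds_nat_ivl[of "\<lambda>s. J $$ (a, s) * J $$ (s, a') / J $$ (s, s)" 0 3 n] d3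
    unfolding n_def by simp
  finally show "EFIM3 J $$ (a, a') = J $$ (a, a') - (\<Sum>s\<in>{3..<d}. J $$ (a, s) * J $$ (s, a') / J $$ (s, s))"
    unfolding E using a by (simp add: Jpp_def Jpe_def Di_def Jep_def)
qed

lemma pair_sum_aux:
  fixes w x y :: "nat \<Rightarrow> real"
  shows "(\<Sum>i\<in>{1..n}. \<Sum>j\<in>{i+1..n}. w i * w j * (x i - x j) * (y i - y j)) =
    (\<Sum>i\<in>{1..n}. w i) * (\<Sum>i\<in>{1..n}. w i * x i * y i) - (\<Sum>i\<in>{1..n}. w i * x i) * (\<Sum>i\<in>{1..n}. w i * y i)"
proof (induction n)
  case 0
  then show ?case by simp
next
  case (Suc n)
  have "(\<Sum>i\<in>{1..Suc n}. \<Sum>j\<in>{i+1..Suc n}. w i * w j * (x i - x j) * (y i - y j))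
     = (\<Sum>i\<in>{1..n}. \<Sum>j\<in>{i+1..Suc n}. w i * w j * (x i - x j) * (y i - y j))"
    by (simp add: sum.cl_ivl_Suc)
  also have "\<dots> = (\<Sum>i\<in>{1..n}. (\<Sum>j\<in>{i+1..n}. w i * w j * (x i - x j) * (y i - y j))
       + w i * w (Suc n) * (x i - x (Suc n)) * (y i - y (Suc n)))"
    by (rule sum.cong[OF refl]) (auto simp: sum.cl_ivl_Suc)
  also have "\<dots> = (\<Sum>i\<in>{1..n}. \<Sum>j\<in>{i+1..n}. w i * w j * (x i - x j) * (y i - y j))
       + w (Suc n) * ((\<Sum>i\<in>{1..n}. w i * x i * y i) - y (Suc n) * (\<Sum>i\<in>{1..n}. w i * x i)
           - x (Suc n) * (\<Sum>i\<in>{1..n}. w i * y i) + x (Suc n) * y (Suc n) * (\<Sum>i\<in>{1..n}. w i))"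
    by (simp add: sum.distrib sum_subtractf sum_distrib_left algebra_simps)
  finally show ?case unfolding Suc.IH by (simp add: sum.cl_ivl_Suc algebra_simps)
qed

lemma pair_sum:
  fixes w x y :: "nat \<Rightarrow> real"
  shows "(\<Sum>i\<in>{1..n-1}. \<Sum>j\<in>{i+1..n}. w i * w j * (x i - x j) * (y i - y j)) =
    (\<Sum>i\<in>{1..n}. w i) * (\<Sum>i\<in>{1..n}. w i * x i * y i) - (\<Sum>i\<in>{1..n}. w i * x i) * (\<Sum>i\<in>{1..n}. w i * y i)"
proof (cases n)
  case 0 then show ?thesis by simp
next
  case (Suc m)
  then show ?thesis using pair_sum_aux[of w x y n] by (simp add: sum.cl_ivl_Suc)
qed

lemma sp3: "v \<in> carrier_vec 3 \<Longrightarrow> w \<in> carrier_vec 3 \<Longrightarrow> v \<bullet> w = v $ 0 * w $ 0 + v $ 1 * w $ 1 + v $ 2 * w $ 2"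
  unfolding scalar_prod_def by (simp add: numeral_3_eq_3 numeral_2_eq_2)

lemma sum3: "(\<Sum>k<(3::nat). f k) = f 0 + f 1 + (f 2 :: real)"
  by (simp add: numeral_3_eq_3 numeral_2_eq_2)

lemma unit_facts:
  fixes P Q :: "real Matrix.vec"
  assumes P: "P \<in> carrier_vec 3" "P \<bullet> P > 0" and Q: "Q \<in> carrier_vec 3" "Q \<bullet> Q > 0"
  defines "x \<equiv> (P \<bullet> Q) / (vnorm P * vnorm Q)"
  shows "(\<Sum>k<3. (P $ k / vnorm P - Q $ k / vnorm Q)^2) = 2 * (1 - cos (arccos x))"
proof -
  define rp where "rp = vnorm P"
  define rq where "rq = vnorm Q"
  have rp: "rp > 0" "rp^2 = P $ 0 * P $ 0 + P $ 1 * P $ 1 + P $ 2 * P $ 2"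
    unfolding rp_def vnorm_def using P sp3[OF P(1) P(1)] by auto
  have rq: "rq > 0" "rq^2 = Q $ 0 * Q $ 0 + Q $ 1 * Q $ 1 + Q $ 2 * Q $ 2"
    unfolding rq_def vnorm_def using Q sp3[OF Q(1) Q(1)] by auto
  define a0 where "a0 = P $ 0 / rp" define a1 where "a1 = P $ 1 / rp" define a2 where "a2 = P $ 2 / rp"
  define b0 where "b0 = Q $ 0 / rq" define b1 where "b1 = Q $ 1 / rq" define b2 where "b2 = Q $ 2 / rq"
  have "a0^2 + a1^2 + a2^2 = (P $ 0 * P $ 0 + P $ 1 * P $ 1 + P $ 2 * P $ 2) / rp^2"
    unfolding a0_def a1_def a2_def by (simp add: power_divide add_divide_distrib power2_eq_square)
  then have na: "a0^2 + a1^2 + a2^2 = 1" using rp(1) unfolding rp(2)[symmetric] by simp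
  have "b0^2 + b1^2 + b2^2 = (Q $ 0 * Q $ 0 + Q $ 1 * Q $ 1 + Q $ 2 * Q $ 2) / rq^2"
    unfolding b0_def b1_def b2_def by (simp add: power_divide add_divide_distrib power2_eq_square)
  then have nb: "b0^2 + b1^2 + b2^2 = 1" using rq(1) unfolding rq(2)[symmetric] by simp
  have xe: "x = a0 * b0 + a1 * b1 + a2 * b2"
    unfolding x_def sp3[OF P(1) Q(1)] a0_def a1_def a2_def b0_def b1_def b2_def rp_def[symmetric] rq_def[symmetric]
    by (simp add: add_divide_distrib)
  have "0 \<le> (a0 - b0)^2 + (a1 - b1)^2 + (a2 - b2)^2" by simp
  then have x1: "x \<le> 1" using na nb unfolding xe by (simp add: power2_diff algebra_simps)
  have "0 \<le> (a0 + b0)^2 + (a1 + b1)^2 + (a2 + b2)^2" by simp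
  then have x2: "-1 \<le> x" using na nb unfolding xe by (simp add: power2_sum algebra_simps)
  have "cos (arccos x) = x" using x1 x2 by (simp add: cos_arccos)
  moreover have "(\<Sum>k<3. (P $ k / vnorm P - Q $ k / vnorm Q)^2) = (a0 - b0)^2 + (a1 - b1)^2 + (a2 - b2)^2"
    unfolding sum3 a0_def a1_def a2_def b0_def b1_def b2_def rp_def rq_def ..
  ultimately show ?thesis using na nb unfolding xe by (simp add: power2_diff algebra_simps)
qed

locale fim_setup =
  fixes I M N :: nat and lam c df sigma :: real
    and q :: "nat \<Rightarrow> real Matrix.vec" and Om :: "nat \<Rightarrow> real mat"
    and del :: "nat \<Rightarrow> real Matrix.vec" and p :: "real Matrix.vec"
    and g :: "nat \<Rightarrow> real"
  assumes M1: "M \<ge> 1" and N2: "N \<ge> 2" and Neven: "even N"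
    and lam: "lam > 0" and c: "c > 0" and df: "df > 0" and sigma: "sigma > 0"
    and q_dim: "\<And>m. m \<in> {1..M} \<Longrightarrow> q m \<in> carrier_vec 3"
    and Om_dim: "\<And>i. i \<in> {1..I} \<Longrightarrow> Om i \<in> carrier_mat 3 3"
    and del_dim: "\<And>i. i \<in> {1..I} \<Longrightarrow> del i \<in> carrier_vec 3"
    and p_dim: "p \<in> carrier_vec 3"
    and p_ne: "\<And>i. i \<in> {1..I} \<Longrightarrow> p \<noteq> del i"
    and g_pos: "\<And>i. i \<in> {1..I} \<Longrightarrow> g i > 0"
begin

definition "rD i s = (p - del i) $ s / vnorm (p - del i)"
definition "Pp s x = vec 3 ((\<lambda>k. p $ k)(s := x))"
definition "phiD i m s = 2 * pi / lam *
   (SOME D. ((\<lambda>x. ((Pp s x - del i) \<bullet> (Om i *\<^sub>v q m)) / vnorm (Pp s x - del i)) has_real_derivative D) (at (p $ s)))"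
definition "fr n = 2 * pi * freq df N n"
definition "TT (kt :: nat \<Rightarrow> nat) (kb :: nat \<Rightarrow> nat) i m n s =
   (if s < 3 then phiD i m s - fr n / c * rD i s else 0) + of_bool (s = kb i) + fr n * of_bool (s = kt i)"
definition "Th P t b i m n = b + 2 * pi / lam * (((P - del i) \<bullet> (Om i *\<^sub>v q m)) / vnorm (P - del i))
    - fr n * (vnorm (P - del i) / c - t)"

lemma mu_eq: "mu lam c df N q Om del P t gg b i m n = complex_of_real gg * exp (\<i> * complex_of_real (Th P t b i m n))"
proof -
  have "exp (\<i> * complex_of_real (Th P t b i m n)) =
     exp (\<i> * complex_of_real b) * exp (\<i> * complex_of_real (2 * pi / lam *
              (((P - del i) \<bullet> (Om i *\<^sub>v q m)) / vnorm (P - del i))))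
     * exp (- \<i> * complex_of_real (2 * pi * freq df N n * (vnorm (P - del i) / c - t)))"
    unfolding Th_def fr_def by (simp add: exp_add[symmetric] exp_diff[symmetric] algebra_simps)
  then show ?thesis unfolding mu_def by simp
qed

lemma pd_mu:
  assumes i: "i \<in> {1..I}" and m: "m \<in> {1..M}" and k3: "kt i \<ge> 3" "kb i \<ge> 3" "kg i \<ge> 3"
    and e0: "\<And>k. k < 3 \<Longrightarrow> e0 k = p $ k"
  shows "partial_deriv (\<lambda>e. mu lam c df N q Om del (pos_of e) (e (kt i)) (e (kg i)) (e (kb i)) i m n) e0 s
    = (complex_of_real (of_bool (s = kg i)) + \<i> * complex_of_real (e0 (kg i) * TT kt kb i m n s))
       * exp (\<i> * complex_of_real (Th p (e0 (kt i)) (e0 (kb i)) i m n))"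
proof -
  have pos0: "pos_of e0 = p" unfolding pos_of_def using p_dim e0 by (auto intro!: eq_vecI)
  define G where "G x = (e0(s := x)) (kg i)" for x
  define T where "T x = Th (pos_of (e0(s := x))) ((e0(s := x)) (kt i)) ((e0(s := x)) (kb i)) i m n" for x
  have fe: "(\<lambda>x. mu lam c df N q Om del (pos_of (e0(s := x))) ((e0(s := x)) (kt i)) ((e0(s := x)) (kg i)) ((e0(s := x)) (kb i)) i m n)
     = (\<lambda>x. complex_of_real (G x) * exp (\<i> * complex_of_real (T x)))"
    unfolding mu_eq G_def T_def by simp
  have Gd: "(G has_real_derivative of_bool (s = kg i)) (at (e0 s))" unfolding G_def by (rule upd_deriv)
  have Td: "(T has_real_derivative TT kt kb i m n s) (at (e0 s))"
  proof (cases "s < 3")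
    case True
    have ne: "s \<noteq> kt i" "s \<noteq> kb i" using True k3 by auto
    have pos: "pos_of (e0(s := x)) = Pp s x" for x
      unfolding pos_of_def Pp_def using e0 by (auto intro!: eq_vecI)
    have dd: "del i \<in> carrier_vec 3" using del_dim i by auto
    have w: "dim_vec (Om i *\<^sub>v q m) = 3" using Om_dim i by auto
    define F where "F = (\<lambda>x. ((Pp s x - del i) \<bullet> (Om i *\<^sub>v q m)) / vnorm (Pp s x - del i))"
    define R where "R = (\<lambda>x. vnorm (Pp s x - del i))"
    have Tx: "T x = e0 (kb i) + 2 * pi / lam * F x - fr n * (R x / c - e0 (kt i))" for x
      unfolding T_def Th_def pos F_def R_def using ne by simp
    note pd = pos_deriv[OF p_dim dd w p_ne[OF i] True, folded Pp_def]
    define Dd where "Dd = (SOME D. ((\<lambda>x. ((Pp s x - del i) \<bullet> (Om i *\<^sub>v q m)) / vnorm (Pp s x - del i)) has_real_derivative D) (at (p $ s)))"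
    have phid: "(F has_real_derivative Dd) (at (p $ s))"
      using pd(2) unfolding Dd_def F_def real_differentiable_def by (rule someI_ex)
    have rd: "(R has_real_derivative (p - del i) $ s / vnorm (p - del i)) (at (p $ s))"
      using pd(1) unfolding R_def .
    have "(T has_real_derivative (0 + 2 * pi / lam * Dd
       - fr n * (((p - del i) $ s / vnorm (p - del i)) / c - 0))) (at (p $ s))"
      unfolding Tx[abs_def] using phid rd c lam by (auto intro!: derivative_eq_intros simp: field_simps)
    then show ?thesis using True ne e0[OF True] unfolding TT_def phiD_def rD_def Dd_def by (simp add: mult.commute)
  next
    case False
    have pos: "pos_of (e0(s := x)) = p" for x
      unfolding pos_of_def using e0 False pos0[unfolded pos_of_def] by (auto intro!: eq_vecI)
    define B where "B = (\<lambda>x. (e0(s := x)) (kb i))"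
    define Tt where "Tt = (\<lambda>x. (e0(s := x)) (kt i))"
    have Tx: "T x = B x + 2 * pi / lam * (((p - del i) \<bullet> (Om i *\<^sub>v q m)) / vnorm (p - del i))
        - fr n * (vnorm (p - del i) / c - Tt x)" for x
      unfolding T_def Th_def pos B_def Tt_def by simp
    have bd: "(B has_real_derivative of_bool (s = kb i)) (at (e0 s))" unfolding B_def by (rule upd_deriv)
    have td: "(Tt has_real_derivative of_bool (s = kt i)) (at (e0 s))" unfolding Tt_def by (rule upd_deriv)
    have "(T has_real_derivative (of_bool (s = kb i) + 0 - fr n * (0 - of_bool (s = kt i)))) (at (e0 s))"
      unfolding Tx[abs_def] using bd td by (auto intro!: derivative_eq_intros)
    then show ?thesis using False unfolding TT_def by simp
  qed
  have "((\<lambda>x. complex_of_real (G x) * exp (\<i> * complex_of_real (T x))) has_vector_derivative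
     ((complex_of_real (of_bool (s = kg i)) + \<i> * complex_of_real (G (e0 s) * TT kt kb i m n s)) * exp (\<i> * complex_of_real (T (e0 s))))) (at (e0 s))"
    by (rule exp_form_deriv[OF Gd Td])
  moreover have "G (e0 s) = e0 (kg i)" "T (e0 s) = Th p (e0 (kt i)) (e0 (kb i)) i m n"
    unfolding G_def T_def by (auto simp: pos0)
  ultimately have X: "((\<lambda>x. complex_of_real (G x) * exp (\<i> * complex_of_real (T x))) has_vector_derivative
     ((complex_of_real (of_bool (s = kg i)) + \<i> * complex_of_real (e0 (kg i) * TT kt kb i m n s))
       * exp (\<i> * complex_of_real (Th p (e0 (kt i)) (e0 (kb i)) i m n)))) (at (e0 s))" by simp
  show ?thesis by (rule pd_eq) (unfold fe, rule X)
qed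

lemma fr_sum: "(\<Sum>n\<in>{1..N}. fr n) = 0"
  unfolding fr_def using freq_sums(1)[OF Neven] by (simp add: sum_distrib_left[symmetric])

definition "FF = (\<Sum>n\<in>{1..N}. (fr n)^2)"
definition "Phi i a = (\<Sum>m\<in>{1..M}. phiD i m a)"

lemma FF_val: "FF = pi^2 * df^2 * real N * (real N + 1) * (real N + 2) / 3"
proof -
  have "FF = 4 * pi^2 * (\<Sum>n\<in>{1..N}. (freq df N n)^2)"
    unfolding FF_def fr_def by (simp add: power_mult_distrib sum_distrib_left)
  then show ?thesis unfolding freq_sums(2)[OF Neven] by simp
qed

lemma FIM_entry:
  assumes k3: "\<And>i. i \<in> {1..I} \<Longrightarrow> kt i \<ge> 3 \<and> kb i \<ge> 3 \<and> kg i \<ge> 3"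
    and e0p: "\<And>k. k < 3 \<Longrightarrow> e0 k = p $ k" and e0g: "\<And>i. i \<in> {1..I} \<Longrightarrow> e0 (kg i) = g i"
    and muf: "\<And>e i m n. muf e i m n = mu lam c df N q Om del (pos_of e) (e (kt i)) (e (kg i)) (e (kb i)) i m n"
    and s: "s < d" "s' < d"
  shows "FIM sigma I M N d muf e0 $$ (s, s') = 2 / sigma^2 * (\<Sum>i\<in>{1..I}. \<Sum>n\<in>{1..N}. \<Sum>m\<in>{1..M}.
      of_bool (s = kg i) * of_bool (s' = kg i) + (g i)^2 * TT kt kb i m n s * TT kt kb i m n s')"
proof -
  have "Re (cnj (partial_deriv (\<lambda>e. muf e i m n) e0 s) * partial_deriv (\<lambda>e. muf e i m n) e0 s')
     = of_bool (s = kg i) * of_bool (s' = kg i) + (g i)^2 * TT kt kb i m n s * TT kt kb i m n s'"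
    if i: "i \<in> {1..I}" and m: "m \<in> {1..M}" for i m n
  proof -
    have k: "kt i \<ge> 3" "kb i \<ge> 3" "kg i \<ge> 3" using k3[OF i] by auto
    have f: "(\<lambda>e. muf e i m n) = (\<lambda>e. mu lam c df N q Om del (pos_of e) (e (kt i)) (e (kg i)) (e (kb i)) i m n)"
      using muf by auto
    have D: "partial_deriv (\<lambda>e. muf e i m n) e0 x = (complex_of_real (of_bool (x = kg i)) + \<i> * complex_of_real (g i * TT kt kb i m n x))
       * exp (\<i> * complex_of_real (Th p (e0 (kt i)) (e0 (kb i)) i m n))" for x
      unfolding f using pd_mu[of i m kt kb kg e0 n x, OF i m k e0p] e0g[OF i] by simp
    show ?thesis unfolding D cnj_re by (simp add: mult.assoc)
  qed
  then show ?thesis unfolding FIM_def using s by (simp add: Re_sum)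
qed

lemma TT_lo: "a < 3 \<Longrightarrow> kt i \<ge> 3 \<Longrightarrow> kb i \<ge> 3 \<Longrightarrow> TT kt kb i m n a = phiD i m a - fr n / c * rD i a"
  unfolding TT_def by auto

lemma TT_hi: "s \<ge> 3 \<Longrightarrow> TT kt kb i m n s = of_bool (s = kb i) + fr n * of_bool (s = kt i)"
  unfolding TT_def by auto

lemma FIM_sym:
  assumes k3: "\<And>i. i \<in> {1..I} \<Longrightarrow> kt i \<ge> 3 \<and> kb i \<ge> 3 \<and> kg i \<ge> 3"
    and e0p: "\<And>k. k < 3 \<Longrightarrow> e0 k = p $ k" and e0g: "\<And>i. i \<in> {1..I} \<Longrightarrow> e0 (kg i) = g i"
    and muf: "\<And>e i m n. muf e i m n = mu lam c df N q Om del (pos_of e) (e (kt i)) (e (kg i)) (e (kb i)) i m n"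
    and s: "s < d" "s' < d"
  shows "FIM sigma I M N d muf e0 $$ (s, s') = FIM sigma I M N d muf e0 $$ (s', s)"
  using FIM_entry[OF k3 e0p e0g muf s] FIM_entry[OF k3 e0p e0g muf s(2,1)]
  by (simp add: mult_ac)

lemma FIM_pe:
  assumes k3: "\<And>i. i \<in> {1..I} \<Longrightarrow> kt i \<ge> 3 \<and> kb i \<ge> 3 \<and> kg i \<ge> 3"
    and e0p: "\<And>k. k < 3 \<Longrightarrow> e0 k = p $ k" and e0g: "\<And>i. i \<in> {1..I} \<Longrightarrow> e0 (kg i) = g i"
    and muf: "\<And>e i m n. muf e i m n = mu lam c df N q Om del (pos_of e) (e (kt i)) (e (kg i)) (e (kb i)) i m n"
    and a: "a < 3" and s: "3 \<le> s" "s < d"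
  shows "FIM sigma I M N d muf e0 $$ (a, s) = 2 / sigma^2 * (\<Sum>i\<in>{1..I}. (g i)^2 *
      (of_bool (s = kb i) * real N * Phi i a - of_bool (s = kt i) * real M * FF * rD i a / c))"
proof -
  have ad: "a < d" using a s by simp
  have pi: "(\<Sum>n\<in>{1..N}. \<Sum>m\<in>{1..M}. of_bool (a = kg i) * of_bool (s = kg i) + (g i)^2 * TT kt kb i m n a * TT kt kb i m n s)
     = (g i)^2 * (of_bool (s = kb i) * real N * Phi i a - of_bool (s = kt i) * real M * FF * rD i a / c)"
    if i: "i \<in> {1..I}" for i
  proof -
    have k: "kt i \<ge> 3" "kb i \<ge> 3" "kg i \<ge> 3" using k3[OF i] by auto
    define Z where "Z = (of_bool (s = kb i) :: real)"
    define W where "W = (of_bool (s = kt i) :: real)"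
    have ta: "TT kt kb i m n a = phiD i m a - fr n * (rD i a / c)" for m n using TT_lo[of a kt i kb, OF a k(1,2)] by simp
    have ts: "TT kt kb i m n s = Z + fr n * W" for m n using TT_hi[OF s(1)] unfolding Z_def W_def by simp
    have ag: "of_bool (a = kg i) = (0::real)" using a k by simp
    have "(\<Sum>n\<in>{1..N}. \<Sum>m\<in>{1..M}. of_bool (a = kg i) * of_bool (s = kg i) + (g i)^2 * TT kt kb i m n a * TT kt kb i m n s)
      = (g i)^2 * (\<Sum>n\<in>{1..N}. \<Sum>m\<in>{1..M}. (phiD i m a - fr n * (rD i a / c)) * (Z + fr n * W))"
      unfolding ag ta ts by (simp add: sum_distrib_left mult.assoc)
    also have "\<dots> = (g i)^2 * (real N * Z * Phi i a - real M * (rD i a / c) * W * FF)"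
      unfolding gsum[OF finite_atLeastAtMost finite_atLeastAtMost fr_sum] Phi_def FF_def by simp
    finally show ?thesis unfolding Z_def W_def by (simp add: algebra_simps)
  qed
  have E: "FIM sigma I M N d muf e0 $$ (a, s) = 2 / sigma^2 * (\<Sum>i\<in>{1..I}. \<Sum>n\<in>{1..N}. \<Sum>m\<in>{1..M}.
      of_bool (a = kg i) * of_bool (s = kg i) + (g i)^2 * TT kt kb i m n a * TT kt kb i m n s)"
    by (rule FIM_entry) (use k3 e0p e0g muf ad s in auto)
  have "(\<Sum>i\<in>{1..I}. \<Sum>n\<in>{1..N}. \<Sum>m\<in>{1..M}.
      of_bool (a = kg i) * of_bool (s = kg i) + (g i)^2 * TT kt kb i m n a * TT kt kb i m n s)
     = (\<Sum>i\<in>{1..I}. (g i)^2 *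
      (of_bool (s = kb i) * real N * Phi i a - of_bool (s = kt i) * real M * FF * rD i a / c))"
    by (rule sum.cong) (use pi in auto)
  then show ?thesis unfolding E by simp
qed

lemma FIM_ee:
  assumes k3: "\<And>i. i \<in> {1..I} \<Longrightarrow> kt i \<ge> 3 \<and> kb i \<ge> 3 \<and> kg i \<ge> 3"
    and e0p: "\<And>k. k < 3 \<Longrightarrow> e0 k = p $ k" and e0g: "\<And>i. i \<in> {1..I} \<Longrightarrow> e0 (kg i) = g i"
    and muf: "\<And>e i m n. muf e i m n = mu lam c df N q Om del (pos_of e) (e (kt i)) (e (kg i)) (e (kb i)) i m n"
    and s: "3 \<le> s" "s < d" "3 \<le> s'" "s' < d"
  shows "FIM sigma I M N d muf e0 $$ (s, s') = 2 / sigma^2 * (\<Sum>i\<in>{1..I}.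
      real M * real N * of_bool (s = kg i) * of_bool (s' = kg i) + (g i)^2 * real M *
      (real N * of_bool (s = kb i) * of_bool (s' = kb i) + FF * of_bool (s = kt i) * of_bool (s' = kt i)))"
proof -
  have "(\<Sum>n\<in>{1..N}. \<Sum>m\<in>{1..M}. of_bool (s = kg i) * of_bool (s' = kg i) + (g i)^2 * TT kt kb i m n s * TT kt kb i m n s')
     = real M * real N * of_bool (s = kg i) * of_bool (s' = kg i) + (g i)^2 * real M *
      (real N * of_bool (s = kb i) * of_bool (s' = kb i) + FF * of_bool (s = kt i) * of_bool (s' = kt i))"
    for i
  proof -
    define A0 where "A0 = (of_bool (s = kb i) :: real)"
    define B0 where "B0 = (of_bool (s = kt i) :: real)"
    define C0 where "C0 = (of_bool (s' = kb i) :: real)"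
    define D0 where "D0 = (of_bool (s' = kt i) :: real)"
    define X where "X = (of_bool (s = kg i) * of_bool (s' = kg i) :: real)"
    have t1: "TT kt kb i m n s = A0 + fr n * B0" for m n using TT_hi[OF s(1)] unfolding A0_def B0_def by simp
    have t2: "TT kt kb i m n s' = C0 + fr n * D0" for m n using TT_hi[OF s(3)] unfolding C0_def D0_def by simp
    have "(\<Sum>n\<in>{1..N}. \<Sum>m\<in>{1..M}. X + (g i)^2 * TT kt kb i m n s * TT kt kb i m n s')
      = (\<Sum>n\<in>{1..N}. \<Sum>m\<in>{1..M}. X) + (g i)^2 * (\<Sum>n\<in>{1..N}. \<Sum>m\<in>{1..M}.
          (A0 + fr n * B0) * (C0 + fr n * D0))"
      unfolding t1 t2 by (simp only: sum.distrib sum_distrib_left mult.assoc)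
    also have "\<dots> = real M * real N * X + (g i)^2 * real M * (real N * A0 * C0 + FF * B0 * D0)"
      unfolding gsum2[OF finite_atLeastAtMost fr_sum] FF_def by (simp add: algebra_simps)
    finally show ?thesis unfolding X_def A0_def B0_def C0_def D0_def by (simp add: mult.assoc)
  qed
  moreover have "FIM sigma I M N d muf e0 $$ (s, s') = 2 / sigma^2 * (\<Sum>i\<in>{1..I}. \<Sum>n\<in>{1..N}. \<Sum>m\<in>{1..M}.
      of_bool (s = kg i) * of_bool (s' = kg i) + (g i)^2 * TT kt kb i m n s * TT kt kb i m n s')"
    by (rule FIM_entry) (use k3 e0p e0g muf s in auto)
  ultimately show ?thesis by simp
qed

lemma sum_collapse:
  fixes f :: "nat \<Rightarrow> real"
  assumes "finite A" "j \<in> A" "\<And>i. i \<in> A \<Longrightarrow> i \<noteq> j \<Longrightarrow> f i = 0"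
  shows "sum f A = f j"
proof -
  have "sum f A = sum f {j}"
    by (rule sum.mono_neutral_right) (use assms in auto)
  then show ?thesis by simp
qed

lemma FF_pos: "FF > 0"
proof -
  have "real N \<ge> 2" using N2 by simp
  then show ?thesis unfolding FF_val using df by (simp add: zero_less_mult_iff)
qed

definition "mok kt kb kg e0 muf \<longleftrightarrow> (\<forall>i\<in>{1..I}. kt i \<ge> 3 \<and> kb i \<ge> 3 \<and> kg i \<ge> 3) \<and> (\<forall>k<3. e0 k = p $ k)
   \<and> (\<forall>i\<in>{1..I}. e0 (kg i) = g i)
   \<and> (\<forall>e i m n. muf e i m n = mu lam c df N q Om del (pos_of e) (e (kt i)) (e (kg i)) (e (kb i)) i m n)"

lemma FIM_pe':
  assumes "mok kt kb kg e0 muf" and a: "a < 3" and s: "3 \<le> s" "s < d"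
  shows "FIM sigma I M N d muf e0 $$ (a, s) = 2 / sigma^2 * (\<Sum>i\<in>{1..I}. (g i)^2 *
      (of_bool (s = kb i) * real N * Phi i a - of_bool (s = kt i) * real M * FF * rD i a / c))"
  by (rule FIM_pe) (use assms in \<open>auto simp: mok_def\<close>)

lemma FIM_ep':
  assumes "mok kt kb kg e0 muf" and a: "a < 3" and s: "3 \<le> s" "s < d"
  shows "FIM sigma I M N d muf e0 $$ (s, a) = 2 / sigma^2 * (\<Sum>i\<in>{1..I}. (g i)^2 *
      (of_bool (s = kb i) * real N * Phi i a - of_bool (s = kt i) * real M * FF * rD i a / c))"
proof -
  have "FIM sigma I M N d muf e0 $$ (s, a) = FIM sigma I M N d muf e0 $$ (a, s)"
    by (rule FIM_sym) (use assms in \<open>auto simp: mok_def\<close>)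
  then show ?thesis using FIM_pe'[OF assms] by simp
qed

lemma FIM_ee':
  assumes "mok kt kb kg e0 muf" and s: "3 \<le> s" "s < d" "3 \<le> s'" "s' < d"
  shows "FIM sigma I M N d muf e0 $$ (s, s') = 2 / sigma^2 * (\<Sum>i\<in>{1..I}.
      real M * real N * of_bool (s = kg i) * of_bool (s' = kg i) + (g i)^2 * real M *
      (real N * of_bool (s = kb i) * of_bool (s' = kb i) + FF * of_bool (s = kt i) * of_bool (s' = kt i)))"
  by (rule FIM_ee) (use assms in \<open>auto simp: mok_def\<close>)

lemma FIM_off:
  assumes "mok kt kb kg e0 muf" and s: "3 \<le> s" "s < d" "3 \<le> s'" "s' < d" and ne: "s \<noteq> s'"
  shows "FIM sigma I M N d muf e0 $$ (s, s') = 0"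
  unfolding FIM_ee'[OF assms(1) s] using ne by (auto intro!: sum.neutral simp: of_bool_def)

lemma FIM_diag_pos:
  assumes "mok kt kb kg e0 muf" and s: "3 \<le> s" "s < d" and cov: "i0 \<in> {1..I}" "s = kg i0 \<or> s = kb i0 \<or> s = kt i0"
  shows "FIM sigma I M N d muf e0 $$ (s, s) > 0"
proof -
  have M0: "real M > 0" "real N > 0" using M1 N2 by auto
  have nn: "\<And>i. i \<in> {1..I} \<Longrightarrow> 0 \<le> real M * real N * of_bool (s = kg i) * of_bool (s = kg i) + (g i)^2 * real M *
      (real N * of_bool (s = kb i) * of_bool (s = kb i) + FF * of_bool (s = kt i) * of_bool (s = kt i))"
    using FF_pos by simp
  have p0: "0 < real M * real N * of_bool (s = kg i0) * of_bool (s = kg i0) + (g i0)^2 * real M *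
      (real N * of_bool (s = kb i0) * of_bool (s = kb i0) + FF * of_bool (s = kt i0) * of_bool (s = kt i0))"
  proof -
    define A where "A = real M * real N * of_bool (s = kg i0) * of_bool (s = kg i0)"
    define B where "B = (g i0)^2 * real M * (real N * of_bool (s = kb i0) * of_bool (s = kb i0))"
    define C where "C = (g i0)^2 * real M * (FF * of_bool (s = kt i0) * of_bool (s = kt i0))"
    have g0: "(g i0)^2 > 0" using g_pos[OF cov(1)] by simp
    have "A \<ge> 0" "B \<ge> 0" "C \<ge> 0" unfolding A_def B_def C_def using M0 FF_pos g0 by simp_all
    moreover have "A > 0 \<or> B > 0 \<or> C > 0"
      using cov(2) M0 FF_pos g0 unfolding A_def B_def C_def by (elim disjE) simp_all
    ultimately have "A + B + C > 0" by linarith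
    then show ?thesis unfolding A_def B_def C_def by (simp add: algebra_simps)
  qed
  have "0 < (\<Sum>i\<in>{1..I}. real M * real N * of_bool (s = kg i) * of_bool (s = kg i) + (g i)^2 * real M *
      (real N * of_bool (s = kb i) * of_bool (s = kb i) + FF * of_bool (s = kt i) * of_bool (s = kt i)))"
    by (rule sum_pos2[where i=i0]) (use cov p0 nn in auto)
  then show ?thesis unfolding FIM_ee'[OF assms(1) s s] using sigma by simp
qed

lemma mokV: "mok (\<lambda>i. 2 + i) (\<lambda>i. 2 + I + 2 * i) (\<lambda>i. 1 + I + 2 * i) (VLA_param I p tauV g b)
    (mu_VLA lam c df N q Om del I)"
  unfolding mok_def
proof (intro conjI ballI allI impI)
  fix i assume i: "i \<in> {1..I}"
  then have "\<not> (1 + I + 2 * i < 3 + I)" "even (1 + I + 2 * i - (3 + I))" "(1 + I + 2 * i - (3 + I)) div 2 + 1 = i"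
    by auto
  then show "VLA_param I p tauV g b (1 + I + 2 * i) = g i" unfolding VLA_param_def by simp
qed (auto simp: VLA_param_def mu_VLA_def)

lemma mokR: "mok (\<lambda>i. 3) (\<lambda>i. 3 + 2 * i) (\<lambda>i. 2 + 2 * i) (RLA_param I p tauR g b)
    (mu_RLA lam c df N q Om del I)"
  unfolding mok_def
proof (intro conjI ballI allI impI)
  fix i assume i: "i \<in> {1..I}"
  then have "even (2 + 2 * i - 4)" "(2 + 2 * i - 4) div 2 + 1 = i"
    by auto
  then show "RLA_param I p tauR g b (2 + 2 * i) = g i" unfolding RLA_param_def using i by simp
qed (auto simp: RLA_param_def mu_RLA_def)

lemma FIM_pp':
  assumes "mok kt kb kg e0 muf" and a: "a < 3" "a' < 3" and d: "d \<ge> 3"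
  shows "FIM sigma I M N d muf e0 $$ (a, a') = 2 / sigma^2 * (\<Sum>i\<in>{1..I}. \<Sum>n\<in>{1..N}. \<Sum>m\<in>{1..M}.
      (g i)^2 * (phiD i m a - fr n / c * rD i a) * (phiD i m a' - fr n / c * rD i a'))"
proof -
  have k3: "\<And>i. i \<in> {1..I} \<Longrightarrow> kt i \<ge> 3 \<and> kb i \<ge> 3 \<and> kg i \<ge> 3" using assms(1) by (auto simp: mok_def)
  have E: "FIM sigma I M N d muf e0 $$ (a, a') = 2 / sigma^2 * (\<Sum>i\<in>{1..I}. \<Sum>n\<in>{1..N}. \<Sum>m\<in>{1..M}.
      of_bool (a = kg i) * of_bool (a' = kg i) + (g i)^2 * TT kt kb i m n a * TT kt kb i m n a')"
    by (rule FIM_entry) (use assms in \<open>auto simp: mok_def\<close>)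
  have "(\<Sum>i\<in>{1..I}. \<Sum>n\<in>{1..N}. \<Sum>m\<in>{1..M}.
      of_bool (a = kg i) * of_bool (a' = kg i) + (g i)^2 * TT kt kb i m n a * TT kt kb i m n a') =
     (\<Sum>i\<in>{1..I}. \<Sum>n\<in>{1..N}. \<Sum>m\<in>{1..M}.
      (g i)^2 * (phiD i m a - fr n / c * rD i a) * (phiD i m a' - fr n / c * rD i a'))"
  proof (rule sum.cong[OF refl])
    fix i assume i: "i \<in> {1..I}"
    have k: "kt i \<ge> 3" "kb i \<ge> 3" "kg i \<ge> 3" using k3[OF i] by auto
    show "(\<Sum>n\<in>{1..N}. \<Sum>m\<in>{1..M}.
      of_bool (a = kg i) * of_bool (a' = kg i) + (g i)^2 * TT kt kb i m n a * TT kt kb i m n a') =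
     (\<Sum>n\<in>{1..N}. \<Sum>m\<in>{1..M}.
      (g i)^2 * (phiD i m a - fr n / c * rD i a) * (phiD i m a' - fr n / c * rD i a'))"
      using TT_lo[of a kt i kb, OF a(1) k(1,2)] TT_lo[of a' kt i kb, OF a(2) k(1,2)] a k by simp
  qed
  then show ?thesis unfolding E by simp
qed

definition "bt a a' i = 2 / sigma^2 * (g i)^2 * real N * Phi i a * Phi i a' / real M"
definition "tt a a' i = 2 / sigma^2 * (g i)^2 * real M * FF * rD i a * rD i a' / c^2"

lemma VLA_sum:
  fixes tauV b :: "nat \<Rightarrow> real"
  assumes a: "a < 3" "a' < 3"
  defines "J \<equiv> FIM sigma I M N (3 + 3 * I) (mu_VLA lam c df N q Om del I) (VLA_param I p tauV g b)"
  shows "(\<Sum>s\<in>{3..<3 + 3 * I}. J $$ (a, s) * J $$ (s, a') / J $$ (s, s)) = (\<Sum>i\<in>{1..I}. bt a a' i + tt a a' i)"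
proof -
  note mk = mokV[of tauV b]
  have sM: "sigma \<noteq> 0" "real M \<noteq> 0" "FF \<noteq> 0" "c \<noteq> 0" "real N \<noteq> 0" using sigma M1 FF_pos c N2 by auto
  have pw: "J $$ (a, s) * J $$ (s, a') / J $$ (s, s) =
      (\<Sum>i\<in>{1..I}. of_bool (s = 2 + I + 2 * i) * bt a a' i + of_bool (s = 2 + i) * tt a a' i)"
    if s: "s \<in> {3..<3 + 3 * I}" for s
  proof -
    have s3: "3 \<le> s" "s < 3 + 3 * I" using s by auto
    have "\<exists>i0\<in>{1..I}. s = 2 + i0 \<or> s = 1 + I + 2 * i0 \<or> s = 2 + I + 2 * i0"
    proof (cases "s < 3 + I")
      case True then show ?thesis using s3 by (intro bexI[of _ "s - 2"]) auto
    next
      case False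
      then show ?thesis
      proof (cases "even (s - (3 + I))")
        case True then show ?thesis using s3 False
          by (intro bexI[of _ "(s - (3 + I)) div 2 + 1"]) (auto elim!: evenE)
      next
        case odd: False then show ?thesis using s3 False
          by (intro bexI[of _ "(s - (3 + I)) div 2 + 1"]) (auto elim!: oddE)
      qed
    qed
    then obtain i0 where i0: "i0 \<in> {1..I}" and cs: "s = 2 + i0 \<or> s = 1 + I + 2 * i0 \<or> s = 2 + I + 2 * i0" by blast
    have g0: "g i0 \<noteq> 0" using g_pos[OF i0] by simp
    note pe = FIM_pe'[OF mk a(1) s3(1), of "3 + 3 * I", folded J_def, simplified]
    note ep = FIM_ep'[OF mk a(2) s3(1), of "3 + 3 * I", folded J_def, simplified]
    note ee = FIM_ee'[OF mk s3(1) _ s3(1), of "3 + 3 * I", folded J_def, simplified]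
    from cs show ?thesis
    proof (elim disjE)
      assume s0: "s = 2 + i0"
      have ch: "\<And>i. i \<in> {1..I} \<Longrightarrow> (s = 2 + I + 2 * i) = False" "\<And>i. i \<in> {1..I} \<Longrightarrow> (s = 1 + I + 2 * i) = False"
        "\<And>i. (s = 2 + i) = (i = i0)" using s0 i0 by auto
      have Ja: "J $$ (a, s) = 2 / sigma^2 * ((g i0)^2 * (- (real M * FF * rD i0 a / c)))"
        unfolding pe[OF s3(2)] by (subst sum_collapse[where j=i0]) (use i0 s0 in \<open>auto simp: ch\<close>)
      have Jb: "J $$ (s, a') = 2 / sigma^2 * ((g i0)^2 * (- (real M * FF * rD i0 a' / c)))"
        unfolding ep[OF s3(2)] by (subst sum_collapse[where j=i0]) (use i0 s0 in \<open>auto simp: ch\<close>)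
      have Jc: "J $$ (s, s) = 2 / sigma^2 * ((g i0)^2 * real M * FF)"
        unfolding ee[OF s3(2)] by (subst sum_collapse[where j=i0]) (use i0 s0 in \<open>auto simp: ch\<close>)
      have R: "(\<Sum>i\<in>{1..I}. of_bool (s = 2 + I + 2 * i) * bt a a' i + of_bool (s = 2 + i) * tt a a' i) = tt a a' i0"
        by (subst sum_collapse[where j=i0]) (use i0 s0 in \<open>auto simp: ch\<close>)
      have "J $$ (a, s) * J $$ (s, a') / J $$ (s, s) = tt a a' i0"
        unfolding Ja Jb Jc tt_def using sM g0 by (simp add: field_simps power2_eq_square)
      then show ?thesis using R by simp
    next
      assume s0: "s = 1 + I + 2 * i0"
      have ch: "s \<noteq> Suc (Suc (I + 2 * i))" "s \<noteq> Suc (Suc i)" "s \<noteq> 2 + I + 2 * i" "s \<noteq> 2 + i"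
        if "i \<in> {1..I}" for i
        using s0 i0 that by auto presburger+
      have "J $$ (a, s) = 0"
        unfolding pe[OF s3(2)] by (auto intro!: sum.neutral simp: ch)
      moreover have "(\<Sum>i\<in>{1..I}. of_bool (s = 2 + I + 2 * i) * bt a a' i + of_bool (s = 2 + i) * tt a a' i) = 0"
        by (auto intro!: sum.neutral simp: ch)
      ultimately show ?thesis by simp
    next
      assume s0: "s = 2 + I + 2 * i0"
      have ch: "\<And>i. i \<in> {1..I} \<Longrightarrow> (s = 2 + i) = False" "\<And>i. i \<in> {1..I} \<Longrightarrow> (s = 1 + I + 2 * i) = False"
        "\<And>i. (s = 2 + I + 2 * i) = (i = i0)" using s0 i0 by auto presburger
      have Ja: "J $$ (a, s) = 2 / sigma^2 * ((g i0)^2 * (real N * Phi i0 a))"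
        unfolding pe[OF s3(2)] by (subst sum_collapse[where j=i0]) (use i0 s0 in \<open>auto simp: ch\<close>)
      have Jb: "J $$ (s, a') = 2 / sigma^2 * ((g i0)^2 * (real N * Phi i0 a'))"
        unfolding ep[OF s3(2)] by (subst sum_collapse[where j=i0]) (use i0 s0 in \<open>auto simp: ch\<close>)
      have Jc: "J $$ (s, s) = 2 / sigma^2 * ((g i0)^2 * real M * real N)"
        unfolding ee[OF s3(2)] by (subst sum_collapse[where j=i0]) (use i0 s0 in \<open>auto simp: ch\<close>)
      have R: "(\<Sum>i\<in>{1..I}. of_bool (s = 2 + I + 2 * i) * bt a a' i + of_bool (s = 2 + i) * tt a a' i) = bt a a' i0"
        by (subst sum_collapse[where j=i0]) (use i0 s0 in \<open>auto simp: ch\<close>)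
      have "J $$ (a, s) * J $$ (s, a') / J $$ (s, s) = bt a a' i0"
        unfolding Ja Jb Jc bt_def using sM g0 by (simp add: field_simps power2_eq_square)
      then show ?thesis using R by simp
    qed
  qed
  have "(\<Sum>s\<in>{3..<3 + 3 * I}. J $$ (a, s) * J $$ (s, a') / J $$ (s, s)) =
      (\<Sum>s\<in>{3..<3 + 3 * I}. \<Sum>i\<in>{1..I}. of_bool (s = 2 + I + 2 * i) * bt a a' i + of_bool (s = 2 + i) * tt a a' i)"
    by (rule sum.cong[OF refl]) (rule pw)
  also have "\<dots> = (\<Sum>i\<in>{1..I}. \<Sum>s\<in>{3..<3 + 3 * I}. of_bool (s = 2 + I + 2 * i) * bt a a' i + of_bool (s = 2 + i) * tt a a' i)"
    by (rule sum.swap)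
  also have "\<dots> = (\<Sum>i\<in>{1..I}. bt a a' i + tt a a' i)"
  proof (rule sum.cong[OF refl])
    fix i assume i: "i \<in> {1..I}"
    have b1: "(\<Sum>s\<in>{3..<3 + 3 * I}. of_bool (s = 2 + I + 2 * i) * bt a a' i) = bt a a' i"
      by (subst sum_collapse[where j="2 + I + 2 * i"]) (use i in auto)
    have b2: "(\<Sum>s\<in>{3..<3 + 3 * I}. of_bool (s = 2 + i) * tt a a' i) = tt a a' i"
      by (subst sum_collapse[where j="2 + i"]) (use i in auto)
    show "(\<Sum>s\<in>{3..<3 + 3 * I}. of_bool (s = 2 + I + 2 * i) * bt a a' i + of_bool (s = 2 + i) * tt a a' i) = bt a a' i + tt a a' i"
      unfolding sum.distrib b1 b2 ..
  qed
  finally show ?thesis .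
qed

definition "SG = (\<Sum>i\<in>{1..I}. (g i)^2)"
definition "WA a = (\<Sum>i\<in>{1..I}. (g i)^2 * rD i a)"
definition "tR a a' = 2 / sigma^2 * real M * FF * WA a * WA a' / (c^2 * SG)"

lemma SG_pos: "I \<ge> 1 \<Longrightarrow> SG > 0"
proof -
  assume "I \<ge> 1"
  moreover have "(g i)^2 > 0" if "i \<in> {1..I}" for i
  proof -
    have "g i > 0" by (rule g_pos[OF that])
    then show ?thesis by simp
  qed
  ultimately show ?thesis unfolding SG_def by (intro sum_pos) auto
qed

lemma RLA_sum:
  fixes tauR :: real and b :: "nat \<Rightarrow> real"
  assumes a: "a < 3" "a' < 3" and I1: "I \<ge> 1"
  defines "J \<equiv> FIM sigma I M N (4 + 2 * I) (mu_RLA lam c df N q Om del I) (RLA_param I p tauR g b)"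
  shows "(\<Sum>s\<in>{3..<4 + 2 * I}. J $$ (a, s) * J $$ (s, a') / J $$ (s, s)) = tR a a' + (\<Sum>i\<in>{1..I}. bt a a' i)"
proof -
  note mk = mokR[of tauR b]
  have sM: "sigma \<noteq> 0" "real M \<noteq> 0" "FF \<noteq> 0" "c \<noteq> 0" "real N \<noteq> 0" "SG \<noteq> 0"
    using sigma M1 FF_pos c N2 SG_pos[OF I1] by auto
  have pw: "J $$ (a, s) * J $$ (s, a') / J $$ (s, s) =
      of_bool (s = 3) * tR a a' + (\<Sum>i\<in>{1..I}. of_bool (s = 3 + 2 * i) * bt a a' i)"
    if s: "s \<in> {3..<4 + 2 * I}" for s
  proof -
    have s3: "3 \<le> s" "s < 4 + 2 * I" using s by auto
    have "s = 3 \<or> (\<exists>i0. 1 \<le> i0 \<and> i0 \<le> I \<and> (s = 2 + 2 * i0 \<or> s = 3 + 2 * i0))"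
      using s3 by presburger
    then have cov: "s = 3 \<or> (\<exists>i0\<in>{1..I}. s = 2 + 2 * i0 \<or> s = 3 + 2 * i0)" by auto
    note pe = FIM_pe'[OF mk a(1) s3(1) s3(2), folded J_def]
    note ep = FIM_ep'[OF mk a(2) s3(1) s3(2), folded J_def]
    note ee = FIM_ee'[OF mk s3(1) s3(2) s3(1) s3(2), folded J_def]
    then consider "s = 3" | i0 where "i0 \<in> {1..I}" "s = 2 + 2 * i0" | i0 where "i0 \<in> {1..I}" "s = 3 + 2 * i0"
      using cov by blast
    then show ?thesis
    proof cases
      case 1
      have Ja: "J $$ (a, s) = 2 / sigma^2 * (- (real M * FF / c) * WA a)"
      proof -
        have "(\<Sum>i\<in>{1..I}. (g i)^2 * (of_bool (s = 3 + 2 * i) * real N * Phi i a - of_bool (s = 3) * real M * FF * rD i a / c))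
            = (\<Sum>i\<in>{1..I}. - (real M * FF / c) * ((g i)^2 * rD i a))"
          by (rule sum.cong) (use 1 in auto)
        then show ?thesis unfolding pe WA_def by (simp add: sum_distrib_left)
      qed
      have Jb: "J $$ (s, a') = 2 / sigma^2 * (- (real M * FF / c) * WA a')"
      proof -
        have "(\<Sum>i\<in>{1..I}. (g i)^2 * (of_bool (s = 3 + 2 * i) * real N * Phi i a' - of_bool (s = 3) * real M * FF * rD i a' / c))
            = (\<Sum>i\<in>{1..I}. - (real M * FF / c) * ((g i)^2 * rD i a'))"
          by (rule sum.cong) (use 1 in auto)
        then show ?thesis unfolding ep WA_def by (simp add: sum_distrib_left)
      qed
      have Jc: "J $$ (s, s) = 2 / sigma^2 * (real M * FF * SG)"
      proof -
        have "(\<Sum>i\<in>{1..I}. real M * real N * of_bool (s = 2 + 2 * i) * of_bool (s = 2 + 2 * i) + (g i)^2 * real M *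
            (real N * of_bool (s = 3 + 2 * i) * of_bool (s = 3 + 2 * i) + FF * of_bool (s = 3) * of_bool (s = 3)))
            = (\<Sum>i\<in>{1..I}. real M * FF * (g i)^2)"
          by (rule sum.cong) (use 1 in auto)
        then show ?thesis unfolding ee SG_def by (simp add: sum_distrib_left)
      qed
      have R: "of_bool (s = 3) * tR a a' + (\<Sum>i\<in>{1..I}. of_bool (s = 3 + 2 * i) * bt a a' i) = tR a a'"
        using 1 by (auto intro!: sum.neutral)
      have "J $$ (a, s) * J $$ (s, a') / J $$ (s, s) = tR a a'"
        unfolding Ja Jb Jc tR_def using sM by (simp add: field_simps power2_eq_square)
      then show ?thesis using R by simp
    next
      case (2 i0)
      have ch: "s \<noteq> 3 + 2 * i" "s \<noteq> Suc (Suc (Suc (2 * i)))" if "i \<in> {1..I}" for i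
        using 2 that by auto presburger+
      have s3': "s \<noteq> 3" using 2 by auto
      have "J $$ (a, s) = 0"
        unfolding pe by (auto intro!: sum.neutral simp: ch s3')
      moreover have "of_bool (s = 3) * tR a a' + (\<Sum>i\<in>{1..I}. of_bool (s = 3 + 2 * i) * bt a a' i) = 0"
        by (auto intro!: sum.neutral simp: ch s3')
      ultimately show ?thesis by simp
    next
      case (3 i0)
      have g0: "g i0 \<noteq> 0" using g_pos[OF 3(1)] by simp
      have ch: "s \<noteq> 2 + 2 * i" "s \<noteq> 3" if "i \<in> {1..I}" for i
        using 3 that by auto presburger+
      have ch2: "(s = 3 + 2 * i) = (i = i0)" for i using 3 by auto
      have Ja: "J $$ (a, s) = 2 / sigma^2 * ((g i0)^2 * (real N * Phi i0 a))"
        unfolding pe by (subst sum_collapse[where j=i0]) (use 3 in \<open>auto simp: ch ch2\<close>)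
      have Jb: "J $$ (s, a') = 2 / sigma^2 * ((g i0)^2 * (real N * Phi i0 a'))"
        unfolding ep by (subst sum_collapse[where j=i0]) (use 3 in \<open>auto simp: ch ch2\<close>)
      have Jc: "J $$ (s, s) = 2 / sigma^2 * ((g i0)^2 * real M * real N)"
        unfolding ee by (subst sum_collapse[where j=i0]) (use 3 ch in \<open>auto simp: ch2\<close>)
      have R: "of_bool (s = 3) * tR a a' + (\<Sum>i\<in>{1..I}. of_bool (s = 3 + 2 * i) * bt a a' i) = bt a a' i0"
      proof -
        have "s \<noteq> 3" using 3 by auto
        then have "of_bool (s = 3) * tR a a' = 0" by simp
        moreover have "(\<Sum>i\<in>{1..I}. of_bool (s = 3 + 2 * i) * bt a a' i) = bt a a' i0"
          by (subst sum_collapse[where j=i0]) (use 3 in \<open>auto simp: ch2\<close>)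
        ultimately show ?thesis by simp
      qed
      have "J $$ (a, s) * J $$ (s, a') / J $$ (s, s) = bt a a' i0"
        unfolding Ja Jb Jc bt_def using sM g0 by (simp add: field_simps power2_eq_square)
      then show ?thesis using R by simp
    qed
  qed
  have "(\<Sum>s\<in>{3..<4 + 2 * I}. J $$ (a, s) * J $$ (s, a') / J $$ (s, s)) =
      (\<Sum>s\<in>{3..<4 + 2 * I}. of_bool (s = 3) * tR a a' + (\<Sum>i\<in>{1..I}. of_bool (s = 3 + 2 * i) * bt a a' i))"
    by (rule sum.cong[OF refl]) (rule pw)
  also have "\<dots> = (\<Sum>s\<in>{3..<4 + 2 * I}. of_bool (s = 3) * tR a a') + (\<Sum>i\<in>{1..I}. \<Sum>s\<in>{3..<4 + 2 * I}. of_bool (s = 3 + 2 * i) * bt a a' i)"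
    by (simp only: sum.distrib sum.swap[of _ "{1..I}"])
  also have "\<dots> = tR a a' + (\<Sum>i\<in>{1..I}. bt a a' i)"
  proof -
    have b1: "(\<Sum>s\<in>{3..<4 + 2 * I}. of_bool (s = 3) * tR a a') = tR a a'"
      by (subst sum_collapse[where j=3]) auto
    have b2: "(\<Sum>s\<in>{3..<4 + 2 * I}. of_bool (s = 3 + 2 * i) * bt a a' i) = bt a a' i" if i: "i \<in> {1..I}" for i
      by (subst sum_collapse[where j="3 + 2 * i"]) (use i in auto)
    have "(\<Sum>i\<in>{1..I}. \<Sum>s\<in>{3..<4 + 2 * I}. of_bool (s = 3 + 2 * i) * bt a a' i) = (\<Sum>i\<in>{1..I}. bt a a' i)"
      by (rule sum.cong[OF refl]) (rule b2)
    then show ?thesis unfolding b1 by simp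
  qed
  finally show ?thesis .
qed

end


theorem proposition1:
  fixes I M N :: nat and lam c df sigma :: real
    and q :: "nat \<Rightarrow> real Matrix.vec" and Om :: "nat \<Rightarrow> real mat"
    and del :: "nat \<Rightarrow> real Matrix.vec" and p :: "real Matrix.vec"
    and g b tauV :: "nat \<Rightarrow> real" and tauR :: real
  assumes I2: "I \<ge> 2" and M1: "M \<ge> 1" and N2: "N \<ge> 2" and Neven: "even N"
    and lam: "lam > 0" and c: "c > 0" and df: "df > 0" and sigma: "sigma > 0"
    and q_dim: "\<And>m. m \<in> {1..M} \<Longrightarrow> q m \<in> carrier_vec 3"
    and Om_dim: "\<And>i. i \<in> {1..I} \<Longrightarrow> Om i \<in> carrier_mat 3 3"
    and Om_orth: "\<And>i. i \<in> {1..I} \<Longrightarrow> transpose_mat (Om i) * Om i = 1\<^sub>m 3"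
    and Om_det: "\<And>i. i \<in> {1..I} \<Longrightarrow> det (Om i) = 1"
    and del_dim: "\<And>i. i \<in> {1..I} \<Longrightarrow> del i \<in> carrier_vec 3"
    and p_dim: "p \<in> carrier_vec 3"
    and p_ne: "\<And>i. i \<in> {1..I} \<Longrightarrow> p \<noteq> del i"
    and g_pos: "\<And>i. i \<in> {1..I} \<Longrightarrow> g i > 0"
  defines "V \<equiv> EFIM3 (FIM sigma I M N (3 + 3 * I) (mu_VLA lam c df N q Om del I)
                        (VLA_param I p tauV g b))"
    and "R \<equiv> EFIM3 (FIM sigma I M N (4 + 2 * I) (mu_RLA lam c df N q Om del I)
                        (RLA_param I p tauR g b))"
    and "u \<equiv> (\<lambda>i. (1 / vnorm (p - del i)) \<cdot>\<^sub>v (p - del i))"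
    and "zeta \<equiv> (\<lambda>i j. 2 * pi\<^sup>2 * df\<^sup>2 * real M * real N * real (N + 1) * real (N + 2)
                     / (3 * sigma\<^sup>2 * c\<^sup>2)
                   * ((g i)\<^sup>2 * (g j)\<^sup>2 / (\<Sum>k\<in>{1..I}. (g k)\<^sup>2)))"
    and "rho \<equiv> (\<lambda>i j. arccos (((p - del i) \<bullet> (p - del j)) / (vnorm (p - del i) * vnorm (p - del j))))"
  shows "R - V = mat 3 3 (\<lambda>(a, a'). \<Sum>i\<in>{1..I-1}. \<Sum>j\<in>{i+1..I}.
                     zeta i j * ((u i - u j) $ a) * ((u i - u j) $ a'))
     \<and> mtrace (R - V) = (\<Sum>i\<in>{1..I-1}. \<Sum>j\<in>{i+1..I}. 2 * zeta i j * (1 - cos (rho i j)))"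
proof -
  interpret F: fim_setup I M N lam c df sigma q Om del p g
    by unfold_locales (use M1 N2 Neven lam c df sigma q_dim Om_dim del_dim p_dim p_ne g_pos in auto)
  have I1: "I \<ge> 1" using I2 by simp
  define JV where "JV = FIM sigma I M N (3 + 3 * I) (mu_VLA lam c df N q Om del I) (VLA_param I p tauV g b)"
  define JR where "JR = FIM sigma I M N (4 + 2 * I) (mu_RLA lam c df N q Om del I) (RLA_param I p tauR g b)"
  have Vd: "V = EFIM3 JV" unfolding V_def JV_def ..
  have Rd: "R = EFIM3 JR" unfolding R_def JR_def ..
  have SV: "EFIM3 JV \<in> carrier_mat 3 3 \<and> (\<forall>a a'. a < 3 \<longrightarrow> a' < 3 \<longrightarrow> EFIM3 JV $$ (a, a') =
      JV $$ (a, a') - (\<Sum>s\<in>{3..<3 + 3 * I}. JV $$ (a, s) * JV $$ (s, a') / JV $$ (s, s)))"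
  proof -
    have Jc: "JV \<in> carrier_mat (3 + 3 * I) (3 + 3 * I)" unfolding JV_def FIM_def by simp
    have off: "JV $$ (s, s') = 0" if "3 \<le> s" "s < 3 + 3 * I" "3 \<le> s'" "s' < 3 + 3 * I" "s \<noteq> s'" for s s'
      unfolding JV_def by (rule F.FIM_off[OF F.mokV that])
    have dg: "JV $$ (s, s) \<noteq> 0" if s: "3 \<le> s" "s < 3 + 3 * I" for s
    proof -
      have "\<exists>i0. 1 \<le> i0 \<and> i0 \<le> I \<and> (s = 1 + I + 2 * i0 \<or> s = 2 + I + 2 * i0 \<or> s = 2 + i0)"
        using s by presburger
      then obtain i0 where i0: "i0 \<in> {1..I}" "s = 1 + I + 2 * i0 \<or> s = 2 + I + 2 * i0 \<or> s = 2 + i0" by auto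
      have "JV $$ (s, s) > 0" unfolding JV_def by (rule F.FIM_diag_pos[OF F.mokV s i0(1)]) (use i0 in simp)
      then show ?thesis by simp
    qed
    show ?thesis using schur_diag[OF Jc _ off dg] by auto
  qed
  have SR: "EFIM3 JR \<in> carrier_mat 3 3 \<and> (\<forall>a a'. a < 3 \<longrightarrow> a' < 3 \<longrightarrow> EFIM3 JR $$ (a, a') =
      JR $$ (a, a') - (\<Sum>s\<in>{3..<4 + 2 * I}. JR $$ (a, s) * JR $$ (s, a') / JR $$ (s, s)))"
  proof -
    have Jc: "JR \<in> carrier_mat (4 + 2 * I) (4 + 2 * I)" unfolding JR_def FIM_def by simp
    have off: "JR $$ (s, s') = 0" if "3 \<le> s" "s < 4 + 2 * I" "3 \<le> s'" "s' < 4 + 2 * I" "s \<noteq> s'" for s s'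
      unfolding JR_def by (rule F.FIM_off[OF F.mokR that])
    have dg: "JR $$ (s, s) \<noteq> 0" if s: "3 \<le> s" "s < 4 + 2 * I" for s
    proof -
      have "\<exists>i0. 1 \<le> i0 \<and> i0 \<le> I \<and> (s = 2 + 2 * i0 \<or> s = 3 + 2 * i0 \<or> s = 3)"
        using s I1 by presburger
      then obtain i0 where i0: "i0 \<in> {1..I}" "s = 2 + 2 * i0 \<or> s = 3 + 2 * i0 \<or> s = 3" by auto
      have "JR $$ (s, s) > 0" unfolding JR_def by (rule F.FIM_diag_pos[OF F.mokR s i0(1)]) (use i0 in simp)
      then show ?thesis by simp
    qed
    show ?thesis using schur_diag[OF Jc _ off dg] by auto
  qed
  have dimRV: "R - V \<in> carrier_mat 3 3" using SV SR unfolding Vd Rd by auto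
  define K where "K = 2 * real M * F.FF / (sigma^2 * c^2)"
  have uc: "(u i - u j) $ a = F.rD i a - F.rD j a" if "i \<in> {1..I}" "j \<in> {1..I}" "a < 3" for i j a
  proof -
    have "dim_vec (del i) = 3" "dim_vec (del j) = 3" using del_dim that by auto
    then show ?thesis using that(3) unfolding u_def F.rD_def by (simp add: smult_vec_def)
  qed
  have zeta_eq: "zeta i j = K * ((g i)^2 * (g j)^2 / F.SG)" for i j
    unfolding zeta_def K_def F.FF_val F.SG_def by (simp add: field_simps)
  have entry: "(R - V) $$ (a, a') = (\<Sum>i\<in>{1..I-1}. \<Sum>j\<in>{i+1..I}. zeta i j * ((u i - u j) $ a) * ((u i - u j) $ a'))"
    if a: "a < 3" "a' < 3" for a a'
  proof -
    have pp: "JV $$ (a, a') = JR $$ (a, a')"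
      using F.FIM_pp'[OF F.mokV a, where d = "3 + 3 * I"] F.FIM_pp'[OF F.mokR a, where d = "4 + 2 * I"]
      unfolding JV_def JR_def by simp
    have "(R - V) $$ (a, a') = R $$ (a, a') - V $$ (a, a')" using dimRV SV a unfolding Vd by auto
    also have "\<dots> = (\<Sum>i\<in>{1..I}. F.tt a a' i) - F.tR a a'"
      using SV SR a pp F.VLA_sum[OF a, of tauV b, folded JV_def] F.RLA_sum[OF a I1, of tauR b, folded JR_def]
      unfolding Vd Rd by (simp add: sum.distrib)
    also have "\<dots> = K / F.SG * (F.SG * (\<Sum>i\<in>{1..I}. (g i)^2 * F.rD i a * F.rD i a')
        - F.WA a * F.WA a')"
    proof -
      have t1: "(\<Sum>i\<in>{1..I}. F.tt a a' i) = K * (\<Sum>i\<in>{1..I}. (g i)^2 * F.rD i a * F.rD i a')"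
        unfolding sum_distrib_left by (rule sum.cong) (auto simp: F.tt_def K_def field_simps)
      have t2: "F.tR a a' = K * (F.WA a * F.WA a') / F.SG"
        unfolding F.tR_def K_def by (simp add: field_simps)
      show ?thesis unfolding t1 t2 using F.SG_pos[OF I1] by (simp add: field_simps)
    qed
    also have "\<dots> = K / F.SG * (\<Sum>i\<in>{1..I-1}. \<Sum>j\<in>{i+1..I}. (g i)^2 * (g j)^2 *
        (F.rD i a - F.rD j a) * (F.rD i a' - F.rD j a'))"
      unfolding pair_sum F.SG_def F.WA_def by (simp add: mult.assoc)
    also have "\<dots> = (\<Sum>i\<in>{1..I-1}. \<Sum>j\<in>{i+1..I}. zeta i j * ((u i - u j) $ a) * ((u i - u j) $ a'))"
      unfolding sum_distrib_left
    proof (intro sum.cong refl)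
      fix i j assume i: "i \<in> {1..I-1}" and j: "j \<in> {i+1..I}"
      then have ij: "i \<in> {1..I}" "j \<in> {1..I}" by auto
      show "K / F.SG * ((g i)^2 * (g j)^2 * (F.rD i a - F.rD j a) * (F.rD i a' - F.rD j a')) =
          zeta i j * ((u i - u j) $ a) * ((u i - u j) $ a')"
        unfolding zeta_eq uc[OF ij a(1)] uc[OF ij a(2)] by simp
    qed
    finally show ?thesis .
  qed
  have part1: "R - V = mat 3 3 (\<lambda>(a, a'). \<Sum>i\<in>{1..I-1}. \<Sum>j\<in>{i+1..I}.
                     zeta i j * ((u i - u j) $ a) * ((u i - u j) $ a'))"
    by (rule eq_matI) (use dimRV entry in auto)
  have tr: "mtrace (R - V) = (\<Sum>i\<in>{1..I-1}. \<Sum>j\<in>{i+1..I}. 2 * zeta i j * (1 - cos (rho i j)))"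
  proof -
    have "mtrace (R - V) = (\<Sum>k<3. \<Sum>i\<in>{1..I-1}. \<Sum>j\<in>{i+1..I}. zeta i j * ((u i - u j) $ k)^2)"
    proof -
      have dr: "dim_row (R - V) = 3" using dimRV by auto
      have "mtrace (R - V) = (\<Sum>k<3. (R - V) $$ (k, k))" unfolding mtrace_def dr ..
      also have "\<dots> = (\<Sum>k<3. \<Sum>i\<in>{1..I-1}. \<Sum>j\<in>{i+1..I}. zeta i j * ((u i - u j) $ k)^2)"
        by (rule sum.cong) (auto simp: entry power2_eq_square mult.assoc)
      finally show ?thesis .
    qed
    also have "\<dots> = (\<Sum>i\<in>{1..I-1}. \<Sum>j\<in>{i+1..I}. zeta i j * (\<Sum>k<3. ((u i - u j) $ k)^2))"
      by (simp add: sum_distrib_left sum.swap[of _ "{..<3::nat}"])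
    also have "\<dots> = (\<Sum>i\<in>{1..I-1}. \<Sum>j\<in>{i+1..I}. 2 * zeta i j * (1 - cos (rho i j)))"
    proof (intro sum.cong refl)
      fix i j assume i: "i \<in> {1..I-1}" and j: "j \<in> {i+1..I}"
      then have ij: "i \<in> {1..I}" "j \<in> {1..I}" by auto
      have Pi: "p - del i \<in> carrier_vec 3" "(p - del i) \<bullet> (p - del i) > 0"
        using vec3_neq[OF p_dim del_dim[OF ij(1)] p_ne[OF ij(1)]] p_dim del_dim[OF ij(1)] by auto
      have Pj: "p - del j \<in> carrier_vec 3" "(p - del j) \<bullet> (p - del j) > 0"
        using vec3_neq[OF p_dim del_dim[OF ij(2)] p_ne[OF ij(2)]] p_dim del_dim[OF ij(2)] by auto
      have "(\<Sum>k<3. ((u i - u j) $ k)^2) = (\<Sum>k<3. ((p - del i) $ k / vnorm (p - del i) - (p - del j) $ k / vnorm (p - del j))^2)"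
        by (rule sum.cong) (use uc[OF ij] in \<open>auto simp: F.rD_def\<close>)
      also have "\<dots> = 2 * (1 - cos (rho i j))"
        unfolding rho_def by (rule unit_facts[OF Pi Pj])
      finally show "zeta i j * (\<Sum>k<3. ((u i - u j) $ k)^2) = 2 * zeta i j * (1 - cos (rho i j))" by simp
    qed
    finally show ?thesis .
  qed
  show ?thesis using part1 tr by simp
qed

end
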